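(* Under (LS) with $k=1$, (W) and (F1), for all $\underline s_1,\underline s_2\in\mathcal S$, $$\operatorname{Cov}\Big(\sum_{t=1}^Tw_{t,T}f(\underline s_1,\underline X_{t,T}),\sum_{t=1}^Tw_{t,T}f(\underline s_2,\underline X_{t,T})\Big)\longrightarrow\mathbf V(\underline s_1,\underline s_2)\qquad(T\to\infty),$$ where $\mathbf V(\underline s_1,\underline s_2)=\sum_{h\in\mathbb{Z}}\lim_{T\to\infty}\sum_{t=1}^Tw_{t,T}w_{t+h,T}\operatorname{Cov}(f(\underline s_1,\widetilde{\underline X}_0(t/T)),f(\underline s_2,\widetilde{\underline X}_h(t/T)))$.
   Context: (LS) with $k=1$: $\underline X_{t,T}=\underline\mu(t/T)+\sum_{j\in\mathbb{Z}}A_{t,T}(j)\underline\varepsilon_{t-j}$, $t=1,\dots,T$; $(\underline\varepsilon_t)$ i.i.d. centred in $\mathbb{R}^d$, $E|\underline\varepsilon_1|_1<\infty$; $\underline\mu$ continuously differentiable; for some $\vartheta\in(0,1)$, $B<\infty$: $\sup_{t,T}|A_{t,T}(j)|_1\le B\vartheta^{|j|}$ ($|M|_1=\max_j\sum_i|m^{(i,j)}|$); entrywise continuously differentiable $A(\cdot,j)=(a^{(p,q)}(\cdot,j)):[0,1]\to\mathbb{R}^{d\times d}$ with $\sup_u|a^{(p,q)}(u,j)|\le B\vartheta^{|j|}$, $\sup_u|\partial_ua^{(p,q)}(u,j)|\le B\vartheta^{|j|}$, $\sup_{t,T}T|A_{t,T}(j)-A(t/T,j)|_1\le B\vartheta^{|j|}$.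 $\widetilde{\underline X}_t(u)=\underline\mu(u)+\sum_jA(u,j)\underline\varepsilon_{t-j}$; truncations $\widetilde{\underline X}^{(M)}_t(u),\underline X^{(M)}_{t,T}$: sums over $|j|<M$. (W): weights $w_{t,T}\ge0$, $d_T:=\#\{t:w_{t,T}>0\}\to\infty$, $\sup_tw_{t,T}\le C_wd_T^{-1/2}$; weights with index outside $\{1,\dots,T\}$ are $0$. (F1): $(\mathcal S,\rho)$ compact semimetric, $\mathcal S\subseteq\overline{\mathbb{R}}^d$; $\sup_{\underline s}|f(\underline s,\underline x)-f(\underline s,\underline x^\circ)|\le C_{Lip}|\underline x-\underline x^\circ|_1$; for some $\delta\in(0,1/2)$, uniformly bounded $(2+\delta)$-th absolute moments of $f(\underline s,\underline X_{t,T}),f(\underline s,\underline X^{(M)}_{t,T})$ and of $f(\underline s,\widetilde{\underline X}_0(u)),f(\underline s,\widetilde{\underline X}^{(M)}_0(u))$. *)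

theory Defs
  imports "HOL-Probability.Probability"
begin

definition l1norm :: "real^'d \<Rightarrow> real" where
  "l1norm x = (\<Sum>i\<in>UNIV. \<bar>x $ i\<bar>)"

text \<open>Matrix norm: max over columns j of the column sums of absolute values.
  A matrix is an element of real^'d^'d, entry (i,j) is A $ i $ j.\<close>
definition mnorm1 :: "real^'d^'d \<Rightarrow> real" where
  "mnorm1 A = Max (range (\<lambda>j. \<Sum>i\<in>UNIV. \<bar>A $ i $ j\<bar>))"

definition C1_on_unit_with :: "(real \<Rightarrow> 'a::real_normed_vector) \<Rightarrow> (real \<Rightarrow> 'a) \<Rightarrow> bool" where
  "C1_on_unit_with g D \<longleftrightarrow>
     (\<forall>u\<in>{0..1}. (g has_vector_derivative D u) (at u within {0..1})) \<and> continuous_on {0..1} D"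

definition LSX :: "(real \<Rightarrow> real^'d) \<Rightarrow> (nat \<Rightarrow> int \<Rightarrow> int \<Rightarrow> real^'d^'d)
     \<Rightarrow> (int \<Rightarrow> 'w \<Rightarrow> real^'d) \<Rightarrow> nat \<Rightarrow> int \<Rightarrow> 'w \<Rightarrow> real^'d" where
  "LSX \<mu> At \<epsilon> T t \<omega> = \<mu> (real_of_int t / real T) + (\<Sum>\<^sub>\<infinity>j\<in>UNIV. At T t j *v \<epsilon> (t - j) \<omega>)"

definition LSX_trunc :: "(real \<Rightarrow> real^'d) \<Rightarrow> (nat \<Rightarrow> int \<Rightarrow> int \<Rightarrow> real^'d^'d)
     \<Rightarrow> (int \<Rightarrow> 'w \<Rightarrow> real^'d) \<Rightarrow> nat \<Rightarrow> nat \<Rightarrow> int \<Rightarrow> 'w \<Rightarrow> real^'d" where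
  "LSX_trunc \<mu> At \<epsilon> M T t \<omega> = \<mu> (real_of_int t / real T)
      + (\<Sum>j\<in>{j. \<bar>j\<bar> < int M}. At T t j *v \<epsilon> (t - j) \<omega>)"

definition SX :: "(real \<Rightarrow> real^'d) \<Rightarrow> (real \<Rightarrow> int \<Rightarrow> real^'d^'d)
     \<Rightarrow> (int \<Rightarrow> 'w \<Rightarrow> real^'d) \<Rightarrow> real \<Rightarrow> int \<Rightarrow> 'w \<Rightarrow> real^'d" where
  "SX \<mu> A \<epsilon> u t \<omega> = \<mu> u + (\<Sum>\<^sub>\<infinity>j\<in>UNIV. A u j *v \<epsilon> (t - j) \<omega>)"

definition SX_trunc :: "(real \<Rightarrow> real^'d) \<Rightarrow> (real \<Rightarrow> int \<Rightarrow> real^'d^'d)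
     \<Rightarrow> (int \<Rightarrow> 'w \<Rightarrow> real^'d) \<Rightarrow> nat \<Rightarrow> real \<Rightarrow> int \<Rightarrow> 'w \<Rightarrow> real^'d" where
  "SX_trunc \<mu> A \<epsilon> M u t \<omega> = \<mu> u + (\<Sum>j\<in>{j. \<bar>j\<bar> < int M}. A u j *v \<epsilon> (t - j) \<omega>)"

definition Cov :: "'w measure \<Rightarrow> ('w \<Rightarrow> real) \<Rightarrow> ('w \<Rightarrow> real) \<Rightarrow> real" where
  "Cov M X Y = (\<integral>\<omega>. (X \<omega> - (\<integral>\<omega>'. X \<omega>' \<partial>M)) * (Y \<omega> - (\<integral>\<omega>'. Y \<omega>' \<partial>M)) \<partial>M)"

definition compact_semimetric :: "'s set \<Rightarrow> ('s \<Rightarrow> 's \<Rightarrow> real) \<Rightarrow> bool" where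
  "compact_semimetric S \<rho> \<longleftrightarrow>
     (\<forall>x\<in>S. \<rho> x x = 0) \<and> (\<forall>x\<in>S. \<forall>y\<in>S. \<rho> x y \<ge> 0 \<and> \<rho> x y = \<rho> y x) \<and>
     (\<forall>x\<in>S. \<forall>y\<in>S. \<forall>z\<in>S. \<rho> x z \<le> \<rho> x y + \<rho> y z) \<and>
     (\<forall>s::nat \<Rightarrow> 's. (\<forall>n. s n \<in> S) \<longrightarrow>
        (\<exists>(r::nat \<Rightarrow> nat) x. strict_mono r \<and> x \<in> S \<and> (\<lambda>n. \<rho> (s (r n)) x) \<longlonglongrightarrow> 0))"

end

theory Submission
  imports Defs
begin

lemma l1norm_nonneg: "0 \<le> l1norm x"
  unfolding l1norm_def by (simp add: sum_nonneg)

lemma l1norm_add: "l1norm (x + y) \<le> l1norm x + l1norm y"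
  unfolding l1norm_def by (simp add: sum.distrib[symmetric] sum_mono abs_triangle_ineq)

lemma l1norm_diff_commute: "l1norm (x - y) = l1norm (y - x)"
  unfolding l1norm_def by (simp add: abs_minus_commute)

lemma l1norm_zero[simp]: "l1norm 0 = 0"
  unfolding l1norm_def by simp

lemma norm_le_l1norm: "norm x \<le> l1norm x"
  unfolding l1norm_def by (rule norm_le_l1_cart)

lemma l1norm_le_norm: "l1norm (x::real^'d) \<le> real CARD('d) * norm x"
proof -
  have "l1norm x \<le> (\<Sum>i\<in>(UNIV::'d set). norm x)"
    unfolding l1norm_def by (intro sum_mono) (simp add: component_le_norm_cart)
  then show ?thesis by simp
qed

lemma l1norm_sum: "finite F \<Longrightarrow> l1norm (sum f F) \<le> (\<Sum>j\<in>F. l1norm (f j))"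
  by (induction F rule: finite_induct) (auto intro: order_trans[OF l1norm_add])

lemma colsum_le_mnorm1: "(\<Sum>i\<in>UNIV. \<bar>A $ i $ j\<bar>) \<le> mnorm1 A"
  unfolding mnorm1_def by (rule Max_ge) auto

lemma mnorm1_nonneg: "0 \<le> mnorm1 A"
  by (rule order_trans[OF _ colsum_le_mnorm1]) (simp add: sum_nonneg)

lemma mnorm1_le:
  assumes "\<And>i j. \<bar>A $ i $ j\<bar> \<le> b"
  shows "mnorm1 (A::real^'d^'d) \<le> real CARD('d) * b"
  unfolding mnorm1_def
proof (subst Max_le_iff, auto)
  fix j
  have "(\<Sum>i\<in>UNIV. \<bar>A $ i $ j\<bar>) \<le> (\<Sum>i\<in>(UNIV::'d set). b)"
    by (intro sum_mono assms)
  then show "(\<Sum>i\<in>UNIV. \<bar>A $ i $ j\<bar>) \<le> real CARD('d) * b" by simp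
qed

lemma mnorm1_add: "mnorm1 (A + B) \<le> mnorm1 A + mnorm1 B"
proof -
  have *: "(\<Sum>i\<in>UNIV. \<bar>A $ i $ j + B $ i $ j\<bar>) \<le> mnorm1 A + mnorm1 B" for j
  proof -
    have "(\<Sum>i\<in>UNIV. \<bar>A $ i $ j + B $ i $ j\<bar>) \<le> (\<Sum>i\<in>UNIV. \<bar>A $ i $ j\<bar>) + (\<Sum>i\<in>UNIV. \<bar>B $ i $ j\<bar>)"
      by (simp add: sum.distrib[symmetric] sum_mono abs_triangle_ineq)
    also have "\<dots> \<le> mnorm1 A + mnorm1 B"
      by (intro add_mono colsum_le_mnorm1)
    finally show ?thesis .
  qed
  show ?thesis unfolding mnorm1_def[of "A+B"] using * by (subst Max_le_iff) auto
qed

lemma mv_bound: "l1norm (A *v x) \<le> mnorm1 A * l1norm x"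
proof -
  have "l1norm (A *v x) = (\<Sum>i\<in>UNIV. \<bar>\<Sum>j\<in>UNIV. A $ i $ j * x $ j\<bar>)"
    unfolding l1norm_def by (simp add: matrix_vector_mult_def)
  also have "\<dots> \<le> (\<Sum>i\<in>UNIV. \<Sum>j\<in>UNIV. \<bar>A $ i $ j\<bar> * \<bar>x $ j\<bar>)"
    by (intro sum_mono order_trans[OF sum_abs]) (simp add: abs_mult)
  also have "\<dots> = (\<Sum>j\<in>UNIV. (\<Sum>i\<in>UNIV. \<bar>A $ i $ j\<bar>) * \<bar>x $ j\<bar>)"
    by (subst sum.swap) (simp add: sum_distrib_right)
  also have "\<dots> \<le> (\<Sum>j\<in>UNIV. mnorm1 A * \<bar>x $ j\<bar>)"
    by (intro sum_mono mult_right_mono colsum_le_mnorm1) auto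
  also have "\<dots> = mnorm1 A * l1norm x"
    unfolding l1norm_def by (simp add: sum_distrib_left)
  finally show ?thesis .
qed

lemma mv_diff: fixes A B :: "real^'d^'d" shows "A *v x - B *v x = (A - B) *v x"
  by (simp add: matrix_vector_mult_diff_rdistrib[symmetric])

lemma summable_on_sum_fin:
  fixes g :: "'i \<Rightarrow> 'a \<Rightarrow> real"
  assumes "finite I" "\<And>i. i \<in> I \<Longrightarrow> g i summable_on A"
  shows "(\<lambda>x. \<Sum>i\<in>I. g i x) summable_on A"
  using assms by (induction I rule: finite_induct) (auto intro!: summable_on_add)

lemma summable_on_cart_abs:
  fixes f :: "'a \<Rightarrow> real^'d"
  assumes "f summable_on A"
  shows "(\<lambda>x. norm (f x)) summable_on A"
proof -
  have "(\<lambda>x. f x $ i) summable_on A" for i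
    by (rule summable_on_bounded_linear[OF bounded_linear_vec_nth assms])
  then have "(\<lambda>x. \<bar>f x $ i\<bar>) summable_on A" for i
    using summable_on_iff_abs_summable_on_real[of "\<lambda>x. f x $ i" A] by simp
  then have "(\<lambda>x. \<Sum>i\<in>UNIV. \<bar>f x $ i\<bar>) summable_on A"
    by (intro summable_on_sum_fin) auto
  then show ?thesis
    by (rule summable_on_comparison_test) (auto intro: norm_le_l1_cart)
qed

lemma summable_on_cart_iff:
  fixes f :: "'a \<Rightarrow> real^'d"
  shows "f summable_on A \<longleftrightarrow> (\<lambda>x. norm (f x)) summable_on A"
  using summable_on_cart_abs abs_summable_summable by blast

lemma filterlim_sym_int:
  "filterlim (\<lambda>n::nat. {-int n..int n}) (finite_subsets_at_top (UNIV::int set)) sequentially"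
  unfolding filterlim_finite_subsets_at_top
proof (intro allI impI, elim conjE)
  fix X :: "int set" assume "finite X"
  then obtain N where N: "\<And>x. x \<in> X \<Longrightarrow> \<bar>x\<bar> \<le> int N"
  proof -
    obtain N where "\<forall>x\<in>X. nat \<bar>x\<bar> \<le> N"
      using \<open>finite X\<close> finite_nat_set_iff_bounded_le[of "(\<lambda>x. nat \<bar>x\<bar>) ` X"] by auto
    then show ?thesis using that[of N] by fastforce
  qed
  show "\<forall>\<^sub>F x in sequentially. finite {- int x..int x} \<and> X \<subseteq> {- int x..int x} \<and> {- int x..int x} \<subseteq> UNIV"
    using N by (intro eventually_sequentiallyI[of N]) force
qed

lemma has_sum_sym_int:
  assumes "(f has_sum s) (UNIV::int set)"
  shows "(\<lambda>n. sum f {-int n..int n}) \<longlonglongrightarrow> s"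
proof -
  have "(sum f \<longlongrightarrow> s) (finite_subsets_at_top UNIV)" using assms unfolding has_sum_def .
  from filterlim_compose[OF this filterlim_sym_int] show ?thesis by (simp add: o_def)
qed

lemma int_sum_bound:
  fixes g :: "int \<Rightarrow> real" and \<phi> :: "nat \<Rightarrow> real"
  assumes g0: "\<And>j. 0 \<le> g j" and gphi: "\<And>j. g j \<le> \<phi> (nat \<bar>j\<bar>)" and sphi: "summable \<phi>"
  shows "g summable_on UNIV" "infsum g UNIV \<le> 2 * suminf \<phi>"
proof -
  have phi0: "0 \<le> \<phi> n" for n using g0[of "int n"] gphi[of "int n"] by simp
  have fin: "sum g F \<le> 2 * suminf \<phi>" if "finite F" for F
  proof -
    let ?P = "F \<inter> {0..}" and ?N = "F \<inter> {..<0}"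
    have F: "F = ?P \<union> ?N" by auto
    have "sum g F = sum g ?P + sum g ?N"
      using that by (subst F, subst sum.union_disjoint) auto
    also have "sum g ?P \<le> suminf \<phi>"
    proof -
      have "sum g ?P \<le> sum (\<lambda>j. \<phi> (nat \<bar>j\<bar>)) ?P" by (intro sum_mono gphi)
      also have "\<dots> = sum \<phi> ((\<lambda>j. nat \<bar>j\<bar>) ` ?P)"
        by (subst sum.reindex) (auto simp: inj_on_def)
      also have "\<dots> \<le> suminf \<phi>"
        using that by (intro sum_le_suminf sphi) (auto simp: phi0)
      finally show ?thesis .
    qed
    also have "sum g ?N \<le> suminf \<phi>"
    proof -
      have "sum g ?N \<le> sum (\<lambda>j. \<phi> (nat \<bar>j\<bar>)) ?N" by (intro sum_mono gphi)
      also have "\<dots> = sum \<phi> ((\<lambda>j. nat \<bar>j\<bar>) ` ?N)"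
        by (subst sum.reindex) (auto simp: inj_on_def)
      also have "\<dots> \<le> suminf \<phi>"
        using that by (intro sum_le_suminf sphi) (auto simp: phi0)
      finally show ?thesis .
    qed
    finally show ?thesis by simp
  qed
  show sg: "g summable_on UNIV"
    by (rule nonneg_bdd_above_summable_on) (use g0 fin in \<open>auto simp: bdd_above_def\<close>)
  show "infsum g UNIV \<le> 2 * suminf \<phi>"
    by (rule infsum_le_finite_sums[OF sg fin]) auto
qed

lemma geom_tail:
  fixes \<theta> :: real
  assumes "0 < \<theta>" "\<theta> < 1"
  shows "(\<lambda>j::int. if int m \<le> \<bar>j\<bar> then \<theta> ^ nat \<bar>j\<bar> else 0) summable_on UNIV"
        "infsum (\<lambda>j::int. if int m \<le> \<bar>j\<bar> then \<theta> ^ nat \<bar>j\<bar> else 0) UNIV \<le> 2 * \<theta> ^ m / (1 - \<theta>)"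
proof -
  define \<phi> where "\<phi> n = (if m \<le> n then \<theta> ^ n else 0)" for n
  have "(\<lambda>n. \<theta> ^ n * \<theta> ^ m) sums (1 / (1 - \<theta>) * \<theta> ^ m)"
    using assms by (intro sums_mult2 geometric_sums) auto
  then have "(\<lambda>i. \<phi> (i + m)) sums (\<theta> ^ m / (1 - \<theta>))"
    by (simp add: \<phi>_def power_add mult.commute)
  then have s: "\<phi> sums (\<theta> ^ m / (1 - \<theta>))"
    by (subst (asm) sums_iff_shift) (simp add: \<phi>_def)
  have "(\<lambda>j::int. if int m \<le> \<bar>j\<bar> then \<theta> ^ nat \<bar>j\<bar> else 0) summable_on UNIV \<and>
        infsum (\<lambda>j::int. if int m \<le> \<bar>j\<bar> then \<theta> ^ nat \<bar>j\<bar> else 0) UNIV \<le> 2 * suminf \<phi>"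
    using int_sum_bound[of "\<lambda>j::int. if int m \<le> \<bar>j\<bar> then \<theta> ^ nat \<bar>j\<bar> else 0" \<phi>] s assms
    by (auto simp: \<phi>_def sums_summable le_nat_iff)
  then show "(\<lambda>j::int. if int m \<le> \<bar>j\<bar> then \<theta> ^ nat \<bar>j\<bar> else 0) summable_on UNIV"
        "infsum (\<lambda>j::int. if int m \<le> \<bar>j\<bar> then \<theta> ^ nat \<bar>j\<bar> else 0) UNIV \<le> 2 * \<theta> ^ m / (1 - \<theta>)"
    using sums_unique[OF s] by auto
qed

lemma geom_all:
  fixes \<theta> :: real
  assumes "0 < \<theta>" "\<theta> < 1"
  shows "(\<lambda>j::int. \<theta> ^ nat \<bar>j\<bar>) summable_on UNIV"
        "infsum (\<lambda>j::int. \<theta> ^ nat \<bar>j\<bar>) UNIV \<le> 2 / (1 - \<theta>)"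
  using geom_tail[OF assms, of 0] by auto

lemma l1norm_continuous: "continuous_on UNIV (l1norm :: real^'d \<Rightarrow> real)"
  unfolding l1norm_def[abs_def] by (intro continuous_intros)

lemma borel_measurable_l1norm[measurable]: "(l1norm :: real^'d \<Rightarrow> real) \<in> borel_measurable borel"
  by (rule borel_measurable_continuous_onI[OF l1norm_continuous])

lemma borel_measurable_infsum_cart:
  fixes X :: "int \<Rightarrow> 'a \<Rightarrow> real^'d"
  assumes meas[measurable]: "\<And>j. X j \<in> borel_measurable N"
  shows "(\<lambda>\<omega>. infsum (\<lambda>j. X j \<omega>) UNIV) \<in> borel_measurable N"
proof -
  define P where "P \<omega> \<longleftrightarrow> (\<exists>B::nat. \<forall>n::nat. (\<Sum>j\<in>{-int n..int n}. norm (X j \<omega>)) \<le> real B)" for \<omega>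
  have Peq: "P \<omega> \<longleftrightarrow> (\<lambda>j. X j \<omega>) summable_on UNIV" for \<omega>
  proof
    assume "P \<omega>"
    then obtain B :: nat where B: "\<And>n::nat. (\<Sum>j\<in>{-int n..int n}. norm (X j \<omega>)) \<le> real B"
      unfolding P_def by blast
    have "(\<lambda>j. norm (X j \<omega>)) summable_on UNIV"
    proof (rule nonneg_bdd_above_summable_on)
      show "bdd_above (sum (\<lambda>j. norm (X j \<omega>)) ` {F. F \<subseteq> UNIV \<and> finite F})"
        unfolding bdd_above_def
      proof (intro exI[of _ "real B"] ballI)
        fix y assume "y \<in> sum (\<lambda>j. norm (X j \<omega>)) ` {F. F \<subseteq> UNIV \<and> finite F}"
        then obtain F where F: "finite F" "y = sum (\<lambda>j. norm (X j \<omega>)) F" by auto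
        obtain n :: nat where "\<forall>x\<in>(\<lambda>x. nat \<bar>x\<bar>) ` F. x \<le> n"
          using F(1) finite_nat_set_iff_bounded_le[of "(\<lambda>x. nat \<bar>x\<bar>) ` F"] by auto
        then have sub: "F \<subseteq> {-int n..int n}" by force
        have "y \<le> (\<Sum>j\<in>{-int n..int n}. norm (X j \<omega>))"
          unfolding F(2) by (rule sum_mono2[OF _ sub]) auto
        then show "y \<le> real B" using B[of n] by linarith
      qed
    qed auto
    then show "(\<lambda>j. X j \<omega>) summable_on UNIV" using summable_on_cart_iff by blast
  next
    assume "(\<lambda>j. X j \<omega>) summable_on UNIV"
    then have s: "(\<lambda>j. norm (X j \<omega>)) summable_on UNIV" by (rule summable_on_cart_abs)
    obtain B :: nat where B: "infsum (\<lambda>j. norm (X j \<omega>)) UNIV \<le> real B"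
      using real_arch_simple by blast
    have "(\<Sum>j\<in>{-int n..int n}. norm (X j \<omega>)) \<le> real B" for n :: nat
    proof -
      have "(\<Sum>j\<in>{-int n..int n}. norm (X j \<omega>)) = infsum (\<lambda>j. norm (X j \<omega>)) {-int n..int n}"
        by simp
      also have "\<dots> \<le> infsum (\<lambda>j. norm (X j \<omega>)) UNIV"
        by (rule infsum_mono_neutral[OF _ s]) auto
      finally show ?thesis using B by linarith
    qed
    then show "P \<omega>" unfolding P_def by blast
  qed
  have [measurable]: "Measurable.pred N P"
    unfolding P_def by measurable
  define F where "F n \<omega> = (if P \<omega> then (\<Sum>j\<in>{-int n..int n}. X j \<omega>) else 0)" for n \<omega>
  show ?thesis
  proof (rule borel_measurable_LIMSEQ_metric[of F])
    show "F i \<in> borel_measurable N" for i unfolding F_def by measurable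
    fix \<omega> show "(\<lambda>i. F i \<omega>) \<longlonglongrightarrow> infsum (\<lambda>j. X j \<omega>) UNIV"
    proof (cases "P \<omega>")
      case True
      then have "(\<lambda>j. X j \<omega>) summable_on UNIV" using Peq by blast
      then show ?thesis using True has_sum_sym_int[OF has_sum_infsum] by (simp add: F_def)
    next
      case False
      then have "infsum (\<lambda>j. X j \<omega>) UNIV = 0" using Peq infsum_not_exists by blast
      then show ?thesis using False by (simp add: F_def)
    qed
  qed
qed

lemma sym_bdd_summable:
  fixes f :: "int \<Rightarrow> real^'d"
  assumes B: "\<And>n::nat. (\<Sum>j\<in>{-int n..int n}. norm (f j)) \<le> B"
  shows "f summable_on UNIV"
proof -
  have "(\<lambda>j. norm (f j)) summable_on UNIV"
  proof (rule nonneg_bdd_above_summable_on)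
    show "bdd_above (sum (\<lambda>j. norm (f j)) ` {F. F \<subseteq> UNIV \<and> finite F})"
      unfolding bdd_above_def
    proof (intro exI[of _ B] ballI)
      fix y assume "y \<in> sum (\<lambda>j. norm (f j)) ` {F. F \<subseteq> UNIV \<and> finite F}"
      then obtain F where F: "finite F" "y = sum (\<lambda>j. norm (f j)) F" by auto
      obtain n :: nat where "\<forall>x\<in>(\<lambda>x. nat \<bar>x\<bar>) ` F. x \<le> n"
        using F(1) finite_nat_set_iff_bounded_le[of "(\<lambda>x. nat \<bar>x\<bar>) ` F"] by auto
      then have sub: "F \<subseteq> {-int n..int n}" by force
      have "y \<le> (\<Sum>j\<in>{-int n..int n}. norm (f j))"
        unfolding F(2) by (rule sum_mono2[OF _ sub]) auto
      then show "y \<le> B" using B[of n] by linarith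
    qed
  qed auto
  then show ?thesis using abs_summable_summable by blast
qed

lemma finite_sum_le_infsum:
  fixes g :: "int \<Rightarrow> real"
  assumes "g summable_on UNIV" "\<And>j. 0 \<le> g j" "finite F"
  shows "sum g F \<le> infsum g UNIV"
proof -
  have "sum g F = infsum g F" using assms by simp
  also have "\<dots> \<le> infsum g UNIV"
    by (rule infsum_mono_neutral[OF _ assms(1)]) (use assms in auto)
  finally show ?thesis .
qed

lemma borel_measurable_mv[measurable]:
  fixes A :: "real^'d^'d"
  assumes "f \<in> borel_measurable N"
  shows "(\<lambda>x. A *v f x) \<in> borel_measurable N"
  using measurable_compose[OF assms borel_measurable_continuous_onI[OF matrix_vector_mult_linear_continuous_on]] .

locale iid = prob_space M for M :: "'w measure" +
  fixes \<epsilon> :: "int \<Rightarrow> 'w \<Rightarrow> real^'d"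
  assumes eps_meas[measurable]: "\<And>t. \<epsilon> t \<in> borel_measurable M"
  and eps_indep: "indep_vars (\<lambda>_. borel) \<epsilon> UNIV"
  and eps_ident: "\<And>t. distr M borel (\<epsilon> t) = distr M borel (\<epsilon> 0)"
  and eps_int: "integrable M (\<epsilon> 0)"
begin

definition m1 where "m1 = (\<integral>\<omega>. l1norm (\<epsilon> 0 \<omega>) \<partial>M)"

lemma eps_l1_int0: "integrable M (\<lambda>\<omega>. l1norm (\<epsilon> 0 \<omega>))"
proof (rule Bochner_Integration.integrable_bound[of _ "\<lambda>\<omega>. real CARD('d) *\<^sub>R \<epsilon> 0 \<omega>"])
  show "integrable M (\<lambda>\<omega>. real CARD('d) *\<^sub>R \<epsilon> 0 \<omega>)" using eps_int by simp
  show "(\<lambda>\<omega>. l1norm (\<epsilon> 0 \<omega>)) \<in> borel_measurable M" by measurable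
  show "AE x in M. norm (l1norm (\<epsilon> 0 x)) \<le> norm (real CARD('d) *\<^sub>R \<epsilon> 0 x)"
    using l1norm_le_norm by (auto simp: l1norm_nonneg)
qed

lemma eps_l1_int: "integrable M (\<lambda>\<omega>. l1norm (\<epsilon> k \<omega>))"
  using eps_l1_int0 integrable_distr_eq[of "\<epsilon> k" M borel l1norm]
    integrable_distr_eq[of "\<epsilon> 0" M borel l1norm] eps_ident[of k] by simp

lemma eps_l1_integral: "(\<integral>\<omega>. l1norm (\<epsilon> k \<omega>) \<partial>M) = m1"
  using integral_distr[of "\<epsilon> k" M borel l1norm] integral_distr[of "\<epsilon> 0" M borel l1norm] eps_ident[of k]
  unfolding m1_def by simp

lemma m1_nonneg: "0 \<le> m1"
  unfolding m1_def by (simp add: l1norm_nonneg)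

lemma eps_l1_nn: "(\<integral>\<^sup>+\<omega>. ennreal (l1norm (\<epsilon> k \<omega>)) \<partial>M) = ennreal m1"
  using nn_integral_eq_integral[OF eps_l1_int] eps_l1_integral by (simp add: l1norm_nonneg)

definition lin :: "(int \<Rightarrow> real^'d^'d) \<Rightarrow> int \<Rightarrow> 'w \<Rightarrow> real^'d" where
  "lin c k \<omega> = infsum (\<lambda>j. c j *v \<epsilon> (k - j) \<omega>) UNIV"

lemma lin_meas[measurable]: "lin c k \<in> borel_measurable M"
  unfolding lin_def[abs_def] by (rule borel_measurable_infsum_cart) measurable

context
  fixes c :: "int \<Rightarrow> real^'d^'d" and \<beta> :: "int \<Rightarrow> real" and k :: int
  assumes cb: "\<And>j. mnorm1 (c j) \<le> \<beta> j" and bs: "\<beta> summable_on UNIV"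
begin

private lemma b0: "0 \<le> \<beta> j" using cb[of j] mnorm1_nonneg[of "c j"] by linarith

private definition G where "G n \<omega> = (\<Sum>j\<in>{-int n..int n}. \<beta> j * l1norm (\<epsilon> (k - j) \<omega>))"

private lemma G_meas[measurable]: "G n \<in> borel_measurable M" unfolding G_def by measurable

private lemma G_nn: "(\<integral>\<^sup>+\<omega>. ennreal (G n \<omega>) \<partial>M) \<le> ennreal (m1 * infsum \<beta> UNIV)"
proof -
  have "(\<integral>\<^sup>+\<omega>. ennreal (G n \<omega>) \<partial>M) = ennreal (\<integral>\<omega>. G n \<omega> \<partial>M)"
    unfolding G_def
    by (intro nn_integral_eq_integral)
       (auto intro!: sum_nonneg mult_nonneg_nonneg b0 l1norm_nonneg integrable_sum integrable_mult_right eps_l1_int)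
  also have "(\<integral>\<omega>. G n \<omega> \<partial>M) = (\<Sum>j\<in>{-int n..int n}. \<beta> j * m1)"
    unfolding G_def
    by (subst Bochner_Integration.integral_sum) (auto intro!: integrable_mult_right eps_l1_int simp: eps_l1_integral)
  also have "\<dots> = m1 * (\<Sum>j\<in>{-int n..int n}. \<beta> j)" by (simp add: sum_distrib_left mult.commute)
  also have "\<dots> \<le> m1 * infsum \<beta> UNIV"
    by (intro mult_left_mono finite_sum_le_infsum bs b0 m1_nonneg) auto
  finally show ?thesis by (simp add: ennreal_leI)
qed

private lemma G_mono: "m \<le> n \<Longrightarrow> G m \<omega> \<le> G n \<omega>"
  unfolding G_def by (rule sum_mono2) (auto intro!: mult_nonneg_nonneg b0 l1norm_nonneg)

private definition H where "H \<omega> = (SUP n. ennreal (G n \<omega>))"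

private lemma H_nn: "(\<integral>\<^sup>+\<omega>. H \<omega> \<partial>M) \<le> ennreal (m1 * infsum \<beta> UNIV)"
proof -
  have "(\<integral>\<^sup>+\<omega>. H \<omega> \<partial>M) = (SUP n. \<integral>\<^sup>+\<omega>. ennreal (G n \<omega>) \<partial>M)"
    unfolding H_def
    by (rule nn_integral_monotone_convergence_SUP) (auto simp: incseq_def le_fun_def intro!: ennreal_leI G_mono)
  also have "\<dots> \<le> ennreal (m1 * infsum \<beta> UNIV)"
    by (rule SUP_least) (rule G_nn)
  finally show ?thesis .
qed

private lemma H_meas[measurable]: "H \<in> borel_measurable M" unfolding H_def by measurable

private lemma partial_le_G: "(\<Sum>j\<in>{-int n..int n}. l1norm (c j *v \<epsilon> (k - j) \<omega>)) \<le> G n \<omega>"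
  unfolding G_def
  by (intro sum_mono order_trans[OF mv_bound] mult_right_mono cb l1norm_nonneg)

lemma lin_AE_summable: "AE \<omega> in M. (\<lambda>j. c j *v \<epsilon> (k - j) \<omega>) summable_on UNIV"
proof -
  have "AE \<omega> in M. H \<omega> \<noteq> \<infinity>"
    using H_nn by (intro nn_integral_noteq_infinite H_meas) (auto simp: top_unique)
  then show ?thesis
  proof (rule eventually_mono)
    fix \<omega> assume "H \<omega> \<noteq> \<infinity>"
    then obtain r where r: "H \<omega> = ennreal r" "0 \<le> r" using ennreal_cases[of "H \<omega>"] by auto
    have "G n \<omega> \<le> r" for n
    proof -
      have "ennreal (G n \<omega>) \<le> H \<omega>" unfolding H_def by (rule SUP_upper) auto
      then show ?thesis using r by (simp add: ennreal_le_iff)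
    qed
    then show "(\<lambda>j. c j *v \<epsilon> (k - j) \<omega>) summable_on UNIV"
    proof (intro sym_bdd_summable[of _ r])
      fix n :: nat
      have "(\<Sum>j\<in>{-int n..int n}. norm (c j *v \<epsilon> (k - j) \<omega>)) \<le> (\<Sum>j\<in>{-int n..int n}. l1norm (c j *v \<epsilon> (k - j) \<omega>))"
        by (intro sum_mono norm_le_l1norm)
      also have "\<dots> \<le> G n \<omega>" by (rule partial_le_G)
      finally show "(\<Sum>j\<in>{-int n..int n}. norm (c j *v \<epsilon> (k - j) \<omega>)) \<le> r" using \<open>G n \<omega> \<le> r\<close> by linarith
    qed
  qed
qed

lemma lin_l1_le_H: "ennreal (l1norm (lin c k \<omega>)) \<le> H \<omega>"
proof (cases "(\<lambda>j. c j *v \<epsilon> (k - j) \<omega>) summable_on UNIV")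
  case True
  have lim: "(\<lambda>n. \<Sum>j\<in>{-int n..int n}. c j *v \<epsilon> (k - j) \<omega>) \<longlonglongrightarrow> lin c k \<omega>"
    unfolding lin_def using has_sum_sym_int[OF has_sum_infsum[OF True]] .
  have "isCont l1norm (lin c k \<omega>)"
    using l1norm_continuous continuous_on_eq_continuous_at by blast
  from isCont_tendsto_compose[OF this lim]
  have "(\<lambda>n. ennreal (l1norm (\<Sum>j\<in>{-int n..int n}. c j *v \<epsilon> (k - j) \<omega>))) \<longlonglongrightarrow> ennreal (l1norm (lin c k \<omega>))"
    by (rule tendsto_ennrealI)
  then show ?thesis
  proof (rule LIMSEQ_le_const2, intro exI allI impI)
    fix n
    have "l1norm (\<Sum>j\<in>{-int n..int n}. c j *v \<epsilon> (k - j) \<omega>) \<le> G n \<omega>"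
      by (rule order_trans[OF l1norm_sum partial_le_G]) auto
    then have "ennreal (l1norm (\<Sum>j\<in>{-int n..int n}. c j *v \<epsilon> (k - j) \<omega>)) \<le> ennreal (G n \<omega>)"
      by (rule ennreal_leI)
    also have "\<dots> \<le> H \<omega>" unfolding H_def by (rule SUP_upper) auto
    finally show "ennreal (l1norm (\<Sum>j\<in>{-int n..int n}. c j *v \<epsilon> (k - j) \<omega>)) \<le> H \<omega>" .
  qed
next
  case False
  then show ?thesis by (simp add: lin_def infsum_not_exists)
qed

lemma lin_nn_bound: "(\<integral>\<^sup>+\<omega>. ennreal (l1norm (lin c k \<omega>)) \<partial>M) \<le> ennreal (m1 * infsum \<beta> UNIV)"
  by (rule order_trans[OF nn_integral_mono H_nn]) (rule lin_l1_le_H)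

end

end

lemma pw_sq: fixes x :: real assumes "0 < \<delta>" shows "x\<^sup>2 \<le> 1 + \<bar>x\<bar> powr (2 + \<delta>)"
proof (cases "\<bar>x\<bar> \<le> 1")
  case True
  then have "x\<^sup>2 \<le> 1" by (simp add: abs_square_le_1)
  then show ?thesis by (smt (verit) powr_ge_zero)
next
  case False
  then have "\<bar>x\<bar> powr 2 \<le> \<bar>x\<bar> powr (2 + \<delta>)" using assms by (intro powr_mono) auto
  moreover have "\<bar>x\<bar> powr 2 = x\<^sup>2" using False by (simp add: powr_numeral)
  ultimately show ?thesis by linarith
qed

lemma pw_abs: fixes x :: real assumes "0 < \<delta>" shows "\<bar>x\<bar> \<le> 1 + \<bar>x\<bar> powr (2 + \<delta>)"
proof (cases "\<bar>x\<bar> \<le> 1")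
  case True
  then show ?thesis by (smt (verit) powr_ge_zero)
next
  case False
  then have "\<bar>x\<bar> powr 1 \<le> \<bar>x\<bar> powr (2 + \<delta>)" using assms by (intro powr_mono) auto
  then show ?thesis using False by simp
qed

lemma pw_prod: fixes x y :: real assumes "0 < \<delta>"
  shows "\<bar>x * y\<bar> \<le> 2 + \<bar>x\<bar> powr (2 + \<delta>) + \<bar>y\<bar> powr (2 + \<delta>)"
proof -
  have "0 \<le> (\<bar>x\<bar> - \<bar>y\<bar>)\<^sup>2" by simp
  then have "2 * (\<bar>x\<bar> * \<bar>y\<bar>) \<le> x\<^sup>2 + y\<^sup>2" by (simp add: power2_eq_square algebra_simps)
  moreover have "0 \<le> \<bar>x\<bar> * \<bar>y\<bar>" by simp
  ultimately have "\<bar>x * y\<bar> \<le> x\<^sup>2 + y\<^sup>2" unfolding abs_mult by linarith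
  then show ?thesis using pw_sq[OF assms, of x] pw_sq[OF assms, of y] by linarith
qed

lemma pw_key:
  fixes d u u' v R \<delta> :: real
  assumes d: "\<bar>d\<bar> \<le> \<bar>u\<bar> + \<bar>u'\<bar>" and R: "0 < R" and \<delta>: "0 < \<delta>"
  shows "\<bar>d * v\<bar> \<le> R * \<bar>d\<bar> + R powr (-\<delta>) * (\<bar>u\<bar> powr (2 + \<delta>) + \<bar>u'\<bar> powr (2 + \<delta>) + 2 * \<bar>v\<bar> powr (2 + \<delta>))"
proof (cases "\<bar>v\<bar> \<le> R")
  case True
  have "\<bar>d * v\<bar> \<le> R * \<bar>d\<bar>" using True mult_left_mono[OF True, of "\<bar>d\<bar>"] unfolding abs_mult by (simp add: mult.commute)
  moreover have "0 \<le> R powr (-\<delta>) * (\<bar>u\<bar> powr (2 + \<delta>) + \<bar>u'\<bar> powr (2 + \<delta>) + 2 * \<bar>v\<bar> powr (2 + \<delta>))"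
    by simp
  ultimately show ?thesis by linarith
next
  case False
  then have v0: "0 < \<bar>v\<bar>" using R by linarith
  have key: "\<bar>w\<bar> * \<bar>v\<bar> \<le> R powr (-\<delta>) * (\<bar>w\<bar> powr (2 + \<delta>) + \<bar>v\<bar> powr (2 + \<delta>))" for w :: real
  proof -
    have "R powr \<delta> \<le> \<bar>v\<bar> powr \<delta>" using False R \<delta> by (intro powr_mono2) auto
    have "\<bar>w\<bar> * \<bar>v\<bar> * R powr \<delta> \<le> \<bar>w\<bar> * \<bar>v\<bar> * \<bar>v\<bar> powr \<delta>"
      using \<open>R powr \<delta> \<le> \<bar>v\<bar> powr \<delta>\<close> by (intro mult_left_mono) auto
    also have "\<dots> = \<bar>w\<bar> * \<bar>v\<bar> powr (1 + \<delta>)" using v0 by (simp add: powr_add)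
    also have "\<dots> \<le> \<bar>w\<bar> powr (2 + \<delta>) + \<bar>v\<bar> powr (2 + \<delta>)"
    proof -
      define a where "a = max \<bar>w\<bar> \<bar>v\<bar>"
      have a0: "0 < a" using v0 by (simp add: a_def)
      have "\<bar>w\<bar> * \<bar>v\<bar> powr (1 + \<delta>) \<le> a * a powr (1 + \<delta>)"
        using \<delta> by (intro mult_mono powr_mono2) (auto simp: a_def)
      also have "\<dots> = a powr 1 * a powr (1 + \<delta>)" using a0 by simp
      also have "\<dots> = a powr (1 + (1 + \<delta>))" by (rule powr_add[symmetric])
      also have "\<dots> = a powr (2 + \<delta>)" by (rule arg_cong[where f="\<lambda>e. a powr e"]) simp
      also have "\<dots> \<le> \<bar>w\<bar> powr (2 + \<delta>) + \<bar>v\<bar> powr (2 + \<delta>)"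
        by (cases "\<bar>w\<bar> \<le> \<bar>v\<bar>") (auto simp: a_def max_def)
      finally show ?thesis .
    qed
    finally have "\<bar>w\<bar> * \<bar>v\<bar> * R powr \<delta> \<le> \<bar>w\<bar> powr (2 + \<delta>) + \<bar>v\<bar> powr (2 + \<delta>)" .
    then have "\<bar>w\<bar> * \<bar>v\<bar> \<le> (\<bar>w\<bar> powr (2 + \<delta>) + \<bar>v\<bar> powr (2 + \<delta>)) / R powr \<delta>"
      using R by (simp add: pos_le_divide_eq)
    then show ?thesis using R by (simp add: powr_minus divide_inverse mult.commute)
  qed
  have "\<bar>d * v\<bar> \<le> \<bar>u\<bar> * \<bar>v\<bar> + \<bar>u'\<bar> * \<bar>v\<bar>"
    using d by (simp add: abs_mult distrib_right[symmetric] mult_right_mono)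
  also have "\<dots> \<le> R powr (-\<delta>) * (\<bar>u\<bar> powr (2 + \<delta>) + \<bar>v\<bar> powr (2 + \<delta>)) + R powr (-\<delta>) * (\<bar>u'\<bar> powr (2 + \<delta>) + \<bar>v\<bar> powr (2 + \<delta>))"
    by (intro add_mono key)
  also have "\<dots> = R powr (-\<delta>) * (\<bar>u\<bar> powr (2 + \<delta>) + \<bar>u'\<bar> powr (2 + \<delta>) + 2 * \<bar>v\<bar> powr (2 + \<delta>))"
    by (simp add: algebra_simps)
  also have "\<dots> \<le> R * \<bar>d\<bar> + R powr (-\<delta>) * (\<bar>u\<bar> powr (2 + \<delta>) + \<bar>u'\<bar> powr (2 + \<delta>) + 2 * \<bar>v\<bar> powr (2 + \<delta>))"
    using R by simp
  finally show ?thesis .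
qed

definition mom :: "'w measure \<Rightarrow> real \<Rightarrow> ('w \<Rightarrow> real) \<Rightarrow> ennreal" where
  "mom M \<delta> U = (\<integral>\<^sup>+\<omega>. ennreal (\<bar>U \<omega>\<bar> powr (2 + \<delta>)) \<partial>M)"

lemma Cov_sym: "Cov M U V = Cov M V U"
  unfolding Cov_def by (simp add: mult.commute)

context prob_space
begin

lemma mom_facts:
  assumes U[measurable]: "U \<in> borel_measurable M" and m: "mom M \<delta> U \<le> ennreal K" and K: "0 \<le> K" and d: "0 < \<delta>"
  shows "integrable M (\<lambda>\<omega>. \<bar>U \<omega>\<bar> powr (2 + \<delta>))"
    and "(\<integral>\<omega>. \<bar>U \<omega>\<bar> powr (2 + \<delta>) \<partial>M) \<le> K"
    and "integrable M U"
    and "(\<integral>\<omega>. \<bar>U \<omega>\<bar> \<partial>M) \<le> 1 + K"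
proof -
  show i1: "integrable M (\<lambda>\<omega>. \<bar>U \<omega>\<bar> powr (2 + \<delta>))"
    using m by (intro integrableI_nonneg) (auto simp: mom_def top_unique less_top[symmetric])
  show i2: "(\<integral>\<omega>. \<bar>U \<omega>\<bar> powr (2 + \<delta>) \<partial>M) \<le> K"
    using m K by (intro integral_real_bounded) (auto simp: mom_def)
  have i1': "integrable M (\<lambda>\<omega>. 1 + \<bar>U \<omega>\<bar> powr (2 + \<delta>))"
    by (rule Bochner_Integration.integrable_add[OF integrable_const i1])
  show i3: "integrable M U"
    by (rule Bochner_Integration.integrable_bound[OF i1']) (use pw_abs[OF d] in auto)
  have "(\<integral>\<omega>. \<bar>U \<omega>\<bar> \<partial>M) \<le> (\<integral>\<omega>. 1 + \<bar>U \<omega>\<bar> powr (2 + \<delta>) \<partial>M)"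
    by (intro Bochner_Integration.integral_mono i1' integrable_abs i3) (auto intro: pw_abs[OF d])
  also have "\<dots> = 1 + (\<integral>\<omega>. \<bar>U \<omega>\<bar> powr (2 + \<delta>) \<partial>M)"
    using i1 by (simp add: prob_space)
  finally show "(\<integral>\<omega>. \<bar>U \<omega>\<bar> \<partial>M) \<le> 1 + K" using i2 by linarith
qed

lemma mom_prod_int:
  assumes U[measurable]: "U \<in> borel_measurable M" and mU: "mom M \<delta> U \<le> ennreal K"
    and V[measurable]: "V \<in> borel_measurable M" and mV: "mom M \<delta> V \<le> ennreal K"
    and K: "0 \<le> K" and d: "0 < \<delta>"
  shows "integrable M (\<lambda>\<omega>. U \<omega> * V \<omega>)"
proof (rule Bochner_Integration.integrable_bound[of _ "\<lambda>\<omega>. 2 + \<bar>U \<omega>\<bar> powr (2 + \<delta>) + \<bar>V \<omega>\<bar> powr (2 + \<delta>)"])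
  show "integrable M (\<lambda>\<omega>. 2 + \<bar>U \<omega>\<bar> powr (2 + \<delta>) + \<bar>V \<omega>\<bar> powr (2 + \<delta>))"
    using mom_facts(1)[OF U mU K d] mom_facts(1)[OF V mV K d] by auto
  show "AE x in M. norm (U x * V x) \<le> norm (2 + \<bar>U x\<bar> powr (2 + \<delta>) + \<bar>V x\<bar> powr (2 + \<delta>))"
    using pw_prod[OF d] by auto
qed auto

lemma Cov_eq:
  assumes "integrable M U" "integrable M V" "integrable M (\<lambda>\<omega>. U \<omega> * V \<omega>)"
  shows "Cov M U V = (\<integral>\<omega>. U \<omega> * V \<omega> \<partial>M) - (\<integral>\<omega>. U \<omega> \<partial>M) * (\<integral>\<omega>. V \<omega> \<partial>M)"
proof -
  let ?a = "\<integral>\<omega>. U \<omega> \<partial>M" and ?b = "\<integral>\<omega>. V \<omega> \<partial>M"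
  have "(\<lambda>\<omega>. (U \<omega> - ?a) * (V \<omega> - ?b)) = (\<lambda>\<omega>. (U \<omega> * V \<omega> - ?b * U \<omega>) - (?a * V \<omega> - ?a * ?b))"
    by (auto simp: algebra_simps)
  then have "Cov M U V = (\<integral>\<omega>. (U \<omega> * V \<omega> - ?b * U \<omega>) - (?a * V \<omega> - ?a * ?b) \<partial>M)"
    unfolding Cov_def by simp
  also have "\<dots> = (\<integral>\<omega>. U \<omega> * V \<omega> \<partial>M) - ?b * ?a - (?a * ?b - ?a * ?b)"
    using assms by (simp add: prob_space)
  finally show ?thesis by simp
qed

lemma cov_perturb:
  assumes U[measurable]: "U \<in> borel_measurable M" and mU: "mom M \<delta> U \<le> ennreal K"
    and U'[measurable]: "U' \<in> borel_measurable M" and mU': "mom M \<delta> U' \<le> ennreal K"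
    and V[measurable]: "V \<in> borel_measurable M" and mV: "mom M \<delta> V \<le> ennreal K"
    and K: "0 \<le> K" and d: "0 < \<delta>" and R: "0 < R"
    and eta: "(\<integral>\<omega>. \<bar>U \<omega> - U' \<omega>\<bar> \<partial>M) \<le> \<eta>"
  shows "\<bar>Cov M U V - Cov M U' V\<bar> \<le> R * \<eta> + R powr (-\<delta>) * (4 * K) + \<eta> * (1 + K)"
proof -
  note f = mom_facts[OF _ _ K d]
  have iU: "integrable M U" and iU': "integrable M U'" and iV: "integrable M V"
    using f(3)[OF U mU] f(3)[OF U' mU'] f(3)[OF V mV] .
  have iUV: "integrable M (\<lambda>\<omega>. U \<omega> * V \<omega>)" and iU'V: "integrable M (\<lambda>\<omega>. U' \<omega> * V \<omega>)"
    using mom_prod_int[OF U mU V mV K d] mom_prod_int[OF U' mU' V mV K d] .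
  have pU: "integrable M (\<lambda>\<omega>. \<bar>U \<omega>\<bar> powr (2 + \<delta>))" and pU': "integrable M (\<lambda>\<omega>. \<bar>U' \<omega>\<bar> powr (2 + \<delta>))"
    and pV: "integrable M (\<lambda>\<omega>. \<bar>V \<omega>\<bar> powr (2 + \<delta>))"
    using f(1)[OF U mU] f(1)[OF U' mU'] f(1)[OF V mV] .
  have iD: "integrable M (\<lambda>\<omega>. U \<omega> - U' \<omega>)" using iU iU' by (rule Bochner_Integration.integrable_diff)
  have iDV: "integrable M (\<lambda>\<omega>. (U \<omega> - U' \<omega>) * V \<omega>)"
  proof -
    have "integrable M (\<lambda>\<omega>. U \<omega> * V \<omega> - U' \<omega> * V \<omega>)"
      using iUV iU'V by (rule Bochner_Integration.integrable_diff)
    then show ?thesis by (simp add: left_diff_distrib)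
  qed
  have eq1: "Cov M U V - Cov M U' V = (\<integral>\<omega>. (U \<omega> - U' \<omega>) * V \<omega> \<partial>M) - (\<integral>\<omega>. U \<omega> - U' \<omega> \<partial>M) * (\<integral>\<omega>. V \<omega> \<partial>M)"
  proof -
    have a: "(\<integral>\<omega>. (U \<omega> - U' \<omega>) * V \<omega> \<partial>M) = (\<integral>\<omega>. U \<omega> * V \<omega> \<partial>M) - (\<integral>\<omega>. U' \<omega> * V \<omega> \<partial>M)"
      unfolding left_diff_distrib by (rule Bochner_Integration.integral_diff[OF iUV iU'V])
    have b: "(\<integral>\<omega>. U \<omega> - U' \<omega> \<partial>M) = (\<integral>\<omega>. U \<omega> \<partial>M) - (\<integral>\<omega>. U' \<omega> \<partial>M)"
      by (rule Bochner_Integration.integral_diff[OF iU iU'])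
    show ?thesis unfolding Cov_eq[OF iU iV iUV] Cov_eq[OF iU' iV iU'V] a b by (simp add: algebra_simps)
  qed
  have tri: "\<bar>x - y * z\<bar> \<le> \<bar>x\<bar> + \<bar>y\<bar> * \<bar>z\<bar>" for x y z :: real
    by (simp add: abs_mult[symmetric] abs_triangle_ineq4)
  have A: "\<bar>\<integral>\<omega>. (U \<omega> - U' \<omega>) * V \<omega> \<partial>M\<bar> \<le> R * \<eta> + R powr (-\<delta>) * (4 * K)"
  proof -
    let ?g = "\<lambda>\<omega>. R * \<bar>U \<omega> - U' \<omega>\<bar> + R powr (-\<delta>) * (\<bar>U \<omega>\<bar> powr (2 + \<delta>) + \<bar>U' \<omega>\<bar> powr (2 + \<delta>) + 2 * \<bar>V \<omega>\<bar> powr (2 + \<delta>))"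
    have ig: "integrable M ?g"
      using iD pU pU' pV by (intro Bochner_Integration.integrable_add integrable_mult_right integrable_abs) auto
    have "\<bar>\<integral>\<omega>. (U \<omega> - U' \<omega>) * V \<omega> \<partial>M\<bar> \<le> (\<integral>\<omega>. \<bar>(U \<omega> - U' \<omega>) * V \<omega>\<bar> \<partial>M)"
      by (rule integral_abs_bound)
    also have "\<dots> \<le> (\<integral>\<omega>. ?g \<omega> \<partial>M)"
    proof (rule integral_mono[OF integrable_abs[OF iDV] ig])
      fix \<omega> show "\<bar>(U \<omega> - U' \<omega>) * V \<omega>\<bar> \<le> ?g \<omega>"
        by (rule pw_key[OF abs_triangle_ineq4 R d])
    qed
    also have "(\<integral>\<omega>. ?g \<omega> \<partial>M) = R * (\<integral>\<omega>. \<bar>U \<omega> - U' \<omega>\<bar> \<partial>M) + R powr (-\<delta>) * ((\<integral>\<omega>. \<bar>U \<omega>\<bar> powr (2 + \<delta>) \<partial>M) + (\<integral>\<omega>. \<bar>U' \<omega>\<bar> powr (2 + \<delta>) \<partial>M) + 2 * (\<integral>\<omega>. \<bar>V \<omega>\<bar> powr (2 + \<delta>) \<partial>M))"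
    proof -
      have "(\<integral>\<omega>. ?g \<omega> \<partial>M) = (\<integral>\<omega>. R * \<bar>U \<omega> - U' \<omega>\<bar> \<partial>M) + (\<integral>\<omega>. R powr (-\<delta>) * (\<bar>U \<omega>\<bar> powr (2 + \<delta>) + \<bar>U' \<omega>\<bar> powr (2 + \<delta>) + 2 * \<bar>V \<omega>\<bar> powr (2 + \<delta>)) \<partial>M)"
        using iD pU pU' pV by (intro Bochner_Integration.integral_add integrable_mult_right integrable_abs Bochner_Integration.integrable_add) auto
      also have "(\<integral>\<omega>. R powr (-\<delta>) * (\<bar>U \<omega>\<bar> powr (2 + \<delta>) + \<bar>U' \<omega>\<bar> powr (2 + \<delta>) + 2 * \<bar>V \<omega>\<bar> powr (2 + \<delta>)) \<partial>M)
          = R powr (-\<delta>) * ((\<integral>\<omega>. \<bar>U \<omega>\<bar> powr (2 + \<delta>) \<partial>M) + (\<integral>\<omega>. \<bar>U' \<omega>\<bar> powr (2 + \<delta>) \<partial>M) + 2 * (\<integral>\<omega>. \<bar>V \<omega>\<bar> powr (2 + \<delta>) \<partial>M))"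
        using pU pU' pV by (simp add: Bochner_Integration.integral_add)
      finally show ?thesis by simp
    qed
    also have "\<dots> \<le> R * \<eta> + R powr (-\<delta>) * (K + K + 2 * K)"
      using f(2)[OF U mU] f(2)[OF U' mU'] f(2)[OF V mV] eta R
      by (intro add_mono mult_left_mono) auto
    finally show ?thesis by simp
  qed
  have B: "\<bar>\<integral>\<omega>. U \<omega> - U' \<omega> \<partial>M\<bar> * \<bar>\<integral>\<omega>. V \<omega> \<partial>M\<bar> \<le> \<eta> * (1 + K)"
  proof (rule mult_mono)
    show "\<bar>\<integral>\<omega>. U \<omega> - U' \<omega> \<partial>M\<bar> \<le> \<eta>" using eta integral_abs_bound[of M "\<lambda>\<omega>. U \<omega> - U' \<omega>"] by linarith
    show "\<bar>\<integral>\<omega>. V \<omega> \<partial>M\<bar> \<le> 1 + K" using f(4)[OF V mV] integral_abs_bound[of M V] by linarith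
    show "0 \<le> \<eta>" by (rule order_trans[OF Bochner_Integration.integral_nonneg eta]) auto
  qed auto
  show ?thesis unfolding eq1 using tri A B by (smt (verit))
qed

end

context iid
begin

abbreviation PB :: "(int \<Rightarrow> real^'d) measure" where "PB \<equiv> PiM UNIV (\<lambda>_. borel)"

definition Esh :: "int \<Rightarrow> 'w \<Rightarrow> int \<Rightarrow> real^'d" where "Esh t \<omega> = (\<lambda>k. \<epsilon> (k + t) \<omega>)"

lemma Esh_meas[measurable]: "Esh t \<in> measurable M PB"
proof -
  have eq: "Esh t = (\<lambda>\<omega>. \<lambda>k\<in>UNIV. \<epsilon> (k + t) \<omega>)" by (auto simp: Esh_def fun_eq_iff)
  show ?thesis by (subst eq) (rule measurable_restrict, simp)
qed

lemma Esh_distr: "distr M PB (Esh t) = PiM UNIV (\<lambda>_. distr M borel (\<epsilon> 0))"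
proof -
  let ?D = "distr M borel (\<epsilon> 0)"
  have "distr M PB (\<lambda>\<omega>. \<lambda>i\<in>UNIV. \<epsilon> i \<omega>) = PiM UNIV (\<lambda>i. distr M borel (\<epsilon> i))"
  proof -
    have "indep_vars (\<lambda>_. borel) \<epsilon> UNIV \<longleftrightarrow> distr M PB (\<lambda>\<omega>. \<lambda>i\<in>UNIV. \<epsilon> i \<omega>) = PiM UNIV (\<lambda>i. distr M borel (\<epsilon> i))"
      by (rule indep_vars_iff_distr_eq_PiM') auto
    then show ?thesis using eps_indep by blast
  qed
  also have "\<dots> = PiM UNIV (\<lambda>_. ?D)" by (rule PiM_cong) (rule refl, rule eps_ident)
  finally have d0': "distr M PB (\<lambda>\<omega>. \<lambda>i\<in>UNIV. \<epsilon> i \<omega>) = PiM UNIV (\<lambda>_. ?D)" .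
  have e0: "Esh 0 = (\<lambda>\<omega>. \<lambda>i\<in>UNIV. \<epsilon> i \<omega>)" by (auto simp: Esh_def fun_eq_iff)
  have d0: "distr M PB (Esh 0) = PiM UNIV (\<lambda>_. ?D)" unfolding e0 by (rule d0')
  have sh: "(\<lambda>x. \<lambda>n\<in>UNIV. x (n + t)) \<in> measurable PB PB" by measurable
  have "distr M PB (Esh t) = distr M PB ((\<lambda>x. \<lambda>n\<in>UNIV. x (n + t)) \<circ> Esh 0)"
    by (rule distr_cong) (auto simp: Esh_def fun_eq_iff)
  also have "\<dots> = distr (distr M PB (Esh 0)) PB (\<lambda>x. \<lambda>n\<in>UNIV. x (n + t))"
    by (rule distr_distr[symmetric, OF sh Esh_meas])
  also have "\<dots> = distr (PiM UNIV (\<lambda>_. ?D)) (PiM UNIV (\<lambda>n. ?D)) (\<lambda>x. \<lambda>n\<in>UNIV. x (n + t))"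
    unfolding d0 by (rule distr_cong[OF refl sets_PiM_cong]) auto
  also have "\<dots> = PiM UNIV (\<lambda>_. ?D)"
    using distr_PiM_reindex[of UNIV "\<lambda>_. ?D" "\<lambda>n. n + t" UNIV]
    by (simp add: prob_space_distr inj_on_def)
  finally show ?thesis .
qed

lemma Esh_integral:
  fixes G :: "(int \<Rightarrow> real^'d) \<Rightarrow> real"
  assumes G: "G \<in> borel_measurable PB"
  shows "(\<integral>\<omega>. G (Esh t \<omega>) \<partial>M) = (\<integral>\<omega>. G (Esh 0 \<omega>) \<partial>M)"
proof -
  have "(\<integral>\<omega>. G (Esh t \<omega>) \<partial>M) = integral\<^sup>L (distr M PB (Esh t)) G"
    by (rule integral_distr[symmetric, OF Esh_meas G])
  also have "\<dots> = integral\<^sup>L (distr M PB (Esh 0)) G" by (simp only: Esh_distr)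
  also have "\<dots> = (\<integral>\<omega>. G (Esh 0 \<omega>) \<partial>M)"
    by (rule integral_distr[OF Esh_meas G])
  finally show ?thesis .
qed

lemma Esh_nn_integral:
  assumes G: "G \<in> borel_measurable PB"
  shows "(\<integral>\<^sup>+\<omega>. G (Esh t \<omega>) \<partial>M) = (\<integral>\<^sup>+\<omega>. G (Esh 0 \<omega>) \<partial>M)"
proof -
  have "(\<integral>\<^sup>+\<omega>. G (Esh t \<omega>) \<partial>M) = integral\<^sup>N (distr M PB (Esh t)) G"
    by (rule nn_integral_distr[symmetric, OF Esh_meas]) (simp add: G)
  also have "\<dots> = integral\<^sup>N (distr M PB (Esh 0)) G" by (simp only: Esh_distr)
  also have "\<dots> = (\<integral>\<^sup>+\<omega>. G (Esh 0 \<omega>) \<partial>M)"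
    by (rule nn_integral_distr[OF Esh_meas]) (simp add: G)
  finally show ?thesis .
qed

lemma Esh_Cov:
  fixes F1 F2 :: "(int \<Rightarrow> real^'d) \<Rightarrow> real"
  assumes [measurable]: "F1 \<in> borel_measurable PB" "F2 \<in> borel_measurable PB"
  shows "Cov M (\<lambda>\<omega>. F1 (Esh t \<omega>)) (\<lambda>\<omega>. F2 (Esh t \<omega>)) = Cov M (\<lambda>\<omega>. F1 (Esh 0 \<omega>)) (\<lambda>\<omega>. F2 (Esh 0 \<omega>))"
proof -
  have e1: "(\<integral>\<omega>. F1 (Esh t \<omega>) \<partial>M) = (\<integral>\<omega>. F1 (Esh 0 \<omega>) \<partial>M)" by (rule Esh_integral) measurable
  have e2: "(\<integral>\<omega>. F2 (Esh t \<omega>) \<partial>M) = (\<integral>\<omega>. F2 (Esh 0 \<omega>) \<partial>M)" by (rule Esh_integral) measurable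
  show ?thesis unfolding Cov_def e1 e2
    by (rule Esh_integral[where G="\<lambda>x. (F1 x - (\<integral>\<omega>. F1 (Esh 0 \<omega>) \<partial>M)) * (F2 x - (\<integral>\<omega>. F2 (Esh 0 \<omega>) \<partial>M))"]) measurable
qed

lemma Esh_mom:
  fixes F :: "(int \<Rightarrow> real^'d) \<Rightarrow> real"
  assumes [measurable]: "F \<in> borel_measurable PB"
  shows "mom M \<delta> (\<lambda>\<omega>. F (Esh t \<omega>)) = mom M \<delta> (\<lambda>\<omega>. F (Esh 0 \<omega>))"
  unfolding mom_def by (rule Esh_nn_integral) measurable

lemma Esh0: "Esh 0 \<omega> k = \<epsilon> k \<omega>" by (simp add: Esh_def)

end

context iid
begin

lemma lin_l1_int:
  assumes cb: "\<And>j. mnorm1 (c j) \<le> \<beta> j" and bs: "\<beta> summable_on UNIV"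
  shows "integrable M (\<lambda>\<omega>. l1norm (lin c k \<omega>))"
proof (rule integrableI_nonneg)
  show "(\<integral>\<^sup>+\<omega>. ennreal (l1norm (lin c k \<omega>)) \<partial>M) < \<infinity>"
    using lin_nn_bound[OF cb bs, of k] by (simp add: order_le_less_trans)
qed (auto simp: l1norm_nonneg)

lemma lin_diff_AE:
  assumes cb: "\<And>j. mnorm1 (c j) \<le> \<beta> j" and bs: "\<beta> summable_on UNIV"
    and cb': "\<And>j. mnorm1 (c' j) \<le> \<beta>' j" and bs': "\<beta>' summable_on UNIV"
  shows "AE \<omega> in M. lin c k \<omega> - lin c' k \<omega> = lin (\<lambda>j. c j - c' j) k \<omega>"
  using lin_AE_summable[OF cb bs, of k] lin_AE_summable[OF cb' bs', of k]
proof eventually_elim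
  case (elim \<omega>)
  let ?f = "\<lambda>j. c j *v \<epsilon> (k - j) \<omega>" and ?g = "\<lambda>j. c' j *v \<epsilon> (k - j) \<omega>"
  have "lin (\<lambda>j. c j - c' j) k \<omega> = infsum (\<lambda>j. ?f j + (- ?g j)) UNIV"
    unfolding lin_def by (simp add: mv_diff[symmetric])
  also have "\<dots> = infsum ?f UNIV + infsum (\<lambda>j. - ?g j) UNIV"
    by (rule infsum_add[OF elim(1)]) (rule summable_on_uminus[THEN iffD2, OF elim(2)])
  also have "\<dots> = lin c k \<omega> - lin c' k \<omega>"
    unfolding lin_def infsum_uminus by simp
  finally show ?case by simp
qed

lemma lin_trunc:
  "(\<Sum>j\<in>{j. \<bar>j\<bar> < int m}. c j *v \<epsilon> (k - j) \<omega>) = lin (\<lambda>j. if \<bar>j\<bar> < int m then c j else 0) k \<omega>"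
proof -
  have fin: "finite {j::int. \<bar>j\<bar> < int m}"
  proof -
    have "{j::int. \<bar>j\<bar> < int m} \<subseteq> {-int m..int m}" by auto
    then show ?thesis by (rule finite_subset) simp
  qed
  have "lin (\<lambda>j. if \<bar>j\<bar> < int m then c j else 0) k \<omega> = infsum (\<lambda>j. c j *v \<epsilon> (k - j) \<omega>) {j. \<bar>j\<bar> < int m}"
    unfolding lin_def by (rule infsum_cong_neutral) auto
  also have "\<dots> = (\<Sum>j\<in>{j. \<bar>j\<bar> < int m}. c j *v \<epsilon> (k - j) \<omega>)" using fin by simp
  finally show ?thesis by simp
qed

lemma lin_diff_nn:
  assumes cb: "\<And>j. mnorm1 (c j) \<le> \<beta> j" and bs: "\<beta> summable_on UNIV"
    and cb': "\<And>j. mnorm1 (c' j) \<le> \<beta>' j" and bs': "\<beta>' summable_on UNIV"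
    and cg: "\<And>j. mnorm1 (c j - c' j) \<le> \<gamma> j" and gs: "\<gamma> summable_on UNIV"
  shows "(\<integral>\<^sup>+\<omega>. ennreal (l1norm (lin c k \<omega> - lin c' k \<omega>)) \<partial>M) \<le> ennreal (m1 * infsum \<gamma> UNIV)"
proof -
  have "(\<integral>\<^sup>+\<omega>. ennreal (l1norm (lin c k \<omega> - lin c' k \<omega>)) \<partial>M) = (\<integral>\<^sup>+\<omega>. ennreal (l1norm (lin (\<lambda>j. c j - c' j) k \<omega>)) \<partial>M)"
    using lin_diff_AE[OF cb bs cb' bs', of k] by (intro nn_integral_cong_AE) auto
  also have "\<dots> \<le> ennreal (m1 * infsum \<gamma> UNIV)"
    by (rule lin_nn_bound[OF cg gs])
  finally show ?thesis .
qed

lemma cov_indep: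
  fixes g1 g2 :: "(int \<Rightarrow> real^'d) \<Rightarrow> real"
  assumes disj: "I1 \<inter> I2 = {}"
    and g1[measurable]: "g1 \<in> borel_measurable (PiM I1 (\<lambda>_. borel))"
    and g2[measurable]: "g2 \<in> borel_measurable (PiM I2 (\<lambda>_. borel))"
    and i1: "integrable M (\<lambda>\<omega>. g1 (restrict (\<lambda>i. \<epsilon> i \<omega>) I1))"
    and i2: "integrable M (\<lambda>\<omega>. g2 (restrict (\<lambda>i. \<epsilon> i \<omega>) I2))"
  shows "Cov M (\<lambda>\<omega>. g1 (restrict (\<lambda>i. \<epsilon> i \<omega>) I1)) (\<lambda>\<omega>. g2 (restrict (\<lambda>i. \<epsilon> i \<omega>) I2)) = 0"
proof -
  have "indep_var (PiM I1 (\<lambda>_. borel)) (\<lambda>\<omega>. restrict (\<lambda>i. \<epsilon> i \<omega>) I1) (PiM I2 (\<lambda>_. borel)) (\<lambda>\<omega>. restrict (\<lambda>i. \<epsilon> i \<omega>) I2)"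
    by (rule indep_var_restrict[OF eps_indep disj]) auto
  from indep_var_compose[OF this g1 g2]
  have ind: "indep_var borel (\<lambda>\<omega>. g1 (restrict (\<lambda>i. \<epsilon> i \<omega>) I1)) borel (\<lambda>\<omega>. g2 (restrict (\<lambda>i. \<epsilon> i \<omega>) I2))"
    by (simp add: o_def)
  show ?thesis
    using Cov_eq[OF i1 i2 indep_var_integrable[OF ind i1 i2]] indep_var_lebesgue_integral[OF ind i1 i2]
    by simp
qed

lemma comp_meas: "(\<lambda>x::int \<Rightarrow> real^'d. x i) \<in> borel_measurable PB"
  using measurable_component_singleton[of i UNIV "\<lambda>_. borel"] by simp

lemma PB_lin_meas[measurable]:
  fixes c :: "int \<Rightarrow> real^'d^'d"
  shows
  "(\<lambda>x::int \<Rightarrow> real^'d. infsum (\<lambda>j. c j *v x (h - j)) UNIV) \<in> borel_measurable PB"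
  by (rule borel_measurable_infsum_cart, rule borel_measurable_mv[OF comp_meas])

end

lemma C1_lip:
  fixes g :: "real \<Rightarrow> 'a::real_normed_vector"
  assumes C: "C1_on_unit_with g D" and L: "\<And>u. u \<in> {0..1} \<Longrightarrow> norm (D u) \<le> L"
    and u: "u \<in> {0..1}" and v: "v \<in> {0..1}"
  shows "norm (g u - g v) \<le> L * \<bar>u - v\<bar>"
proof -
  have "norm (g u - g v) \<le> L * norm (u - v)"
  proof (rule differentiable_bound[where S="{0..1}" and f'="\<lambda>x h. h *\<^sub>R D x"])
    show "convex {0..1::real}" by simp
    show "(g has_derivative (\<lambda>h. h *\<^sub>R D x)) (at x within {0..1})" if "x \<in> {0..1}" for x
      using C that unfolding C1_on_unit_with_def has_vector_derivative_def by blast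
    show "onorm (\<lambda>h. h *\<^sub>R D x) \<le> L" if "x \<in> {0..1}" for x
    proof (rule onorm_le)
      fix h :: real show "norm (h *\<^sub>R D x) \<le> L * norm h"
        using mult_left_mono[OF L[OF that], of "\<bar>h\<bar>"] by (simp add: mult.commute)
    qed
  qed (use u v in auto)
  then show ?thesis by simp
qed

lemma C1_bound:
  assumes C: "C1_on_unit_with g D"
  obtains L where "0 \<le> L" "\<And>u. u \<in> {0..1} \<Longrightarrow> norm (D u) \<le> L"
proof -
  have "continuous_on {0..1} D" using C unfolding C1_on_unit_with_def by blast
  from continuous_on_compact_bound[OF compact_Icc this] that show ?thesis by blast
qed

lemma mu_lip:
  fixes \<mu> :: "real \<Rightarrow> real^'d"
  assumes "\<exists>D. C1_on_unit_with \<mu> D"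
  obtains L where "0 \<le> L" "\<And>u v. u \<in> {0..1} \<Longrightarrow> v \<in> {0..1} \<Longrightarrow> l1norm (\<mu> u - \<mu> v) \<le> L * \<bar>u - v\<bar>"
proof -
  obtain D where D: "C1_on_unit_with \<mu> D" using assms by blast
  obtain L where L: "0 \<le> L" "\<And>u. u \<in> {0..1} \<Longrightarrow> norm (D u) \<le> L" using C1_bound[OF D] by blast
  show ?thesis
  proof (rule that[of "real CARD('d) * L"])
    show "0 \<le> real CARD('d) * L" using L by simp
    fix u v :: real assume uv: "u \<in> {0..1}" "v \<in> {0..1}"
    have "l1norm (\<mu> u - \<mu> v) \<le> real CARD('d) * norm (\<mu> u - \<mu> v)" by (rule l1norm_le_norm)
    also have "\<dots> \<le> real CARD('d) * (L * \<bar>u - v\<bar>)"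
      by (intro mult_left_mono C1_lip[OF D L(2) uv]) auto
    finally show "l1norm (\<mu> u - \<mu> v) \<le> real CARD('d) * L * \<bar>u - v\<bar>" by simp
  qed
qed

lemma A_lip:
  fixes A :: "real \<Rightarrow> int \<Rightarrow> real^'d^'d"
  assumes AC: "\<And>j p q. \<exists>D. C1_on_unit_with (\<lambda>u. A u j $ p $ q) D \<and> (\<forall>u\<in>{0..1}. \<bar>D u\<bar> \<le> b j)"
    and u: "u \<in> {0..1}" and v: "v \<in> {0..1}"
  shows "mnorm1 (A u j - A v j) \<le> real CARD('d) * (b j * \<bar>u - v\<bar>)"
proof (rule mnorm1_le)
  fix p q
  obtain D where D: "C1_on_unit_with (\<lambda>u. A u j $ p $ q) D" "\<forall>u\<in>{0..1}. \<bar>D u\<bar> \<le> b j"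
    using AC by blast
  have "norm (A u j $ p $ q - A v j $ p $ q) \<le> b j * \<bar>u - v\<bar>"
    by (rule C1_lip[OF D(1) _ u v]) (use D(2) in auto)
  then show "\<bar>(A u j - A v j) $ p $ q\<bar> \<le> b j * \<bar>u - v\<bar>" by simp
qed

locale main = iid M \<epsilon> for M :: "'w measure" and \<epsilon> :: "int \<Rightarrow> 'w \<Rightarrow> real^'d" +
  fixes \<mu> :: "real \<Rightarrow> real^'d" and At :: "nat \<Rightarrow> int \<Rightarrow> int \<Rightarrow> real^'d^'d"
    and A :: "real \<Rightarrow> int \<Rightarrow> real^'d^'d" and \<theta> B :: real
    and w :: "nat \<Rightarrow> int \<Rightarrow> real" and dT :: "nat \<Rightarrow> nat" and Cw :: real
    and S :: "(ereal^'d) set" and f :: "ereal^'d \<Rightarrow> real^'d \<Rightarrow> real"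
    and CLip \<delta> K :: real and s1 s2 :: "ereal^'d"
  assumes mu_C1: "\<exists>D. C1_on_unit_with \<mu> D"
    and theta: "0 < \<theta>" "\<theta> < 1"
    and At_bound: "\<And>T t j. 1 \<le> t \<Longrightarrow> t \<le> int T \<Longrightarrow> mnorm1 (At T t j) \<le> B * \<theta> ^ nat \<bar>j\<bar>"
    and A_C1: "\<And>j p q. \<exists>D. C1_on_unit_with (\<lambda>u. A u j $ p $ q) D
                  \<and> (\<forall>u\<in>{0..1}. \<bar>D u\<bar> \<le> B * \<theta> ^ nat \<bar>j\<bar>)"
    and A_bound: "\<And>j p q u. u \<in> {0..1} \<Longrightarrow> \<bar>A u j $ p $ q\<bar> \<le> B * \<theta> ^ nat \<bar>j\<bar>"
    and At_A: "\<And>T t j. 1 \<le> t \<Longrightarrow> t \<le> int T \<Longrightarrow>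
                 real T * mnorm1 (At T t j - A (real_of_int t / real T) j) \<le> B * \<theta> ^ nat \<bar>j\<bar>"
    and w_nonneg: "\<And>T t. 0 \<le> w T t"
    and w_support: "\<And>T t. t < 1 \<or> t > int T \<Longrightarrow> w T t = 0"
    and dT_def: "\<And>T. dT T = card {t. 0 < w T t}"
    and w_bound: "\<And>T t. w T t \<le> Cw / sqrt (real (dT T))"
    and s1: "s1 \<in> S" and s2: "s2 \<in> S"
    and f_Lip: "\<And>s x y. s \<in> S \<Longrightarrow> \<bar>f s x - f s y\<bar> \<le> CLip * l1norm (x - y)"
    and delta: "0 < \<delta>" "\<delta> < 1/2"
    and K0: "0 \<le> K"
    and mom_X: "\<And>s T t. s \<in> S \<Longrightarrow> 1 \<le> t \<Longrightarrow> t \<le> int T \<Longrightarrow> mom M \<delta> (\<lambda>\<omega>. f s (LSX \<mu> At \<epsilon> T t \<omega>)) \<le> ennreal K"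
    and mom_Xm: "\<And>s T t m. s \<in> S \<Longrightarrow> 1 \<le> t \<Longrightarrow> t \<le> int T \<Longrightarrow> mom M \<delta> (\<lambda>\<omega>. f s (LSX_trunc \<mu> At \<epsilon> m T t \<omega>)) \<le> ennreal K"
    and mom_SX0: "\<And>s u. s \<in> S \<Longrightarrow> u \<in> {0..1} \<Longrightarrow> mom M \<delta> (\<lambda>\<omega>. f s (SX \<mu> A \<epsilon> u 0 \<omega>)) \<le> ennreal K"
begin

lemma B0: "0 \<le> B"
proof -
  obtain p :: 'd where True by simp
  have "\<bar>A 0 0 $ p $ p\<bar> \<le> B * \<theta> ^ nat \<bar>0::int\<bar>" by (rule A_bound) simp
  then have "0 \<le> B * \<theta> ^ nat \<bar>0::int\<bar>" by (smt (verit))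
  then show ?thesis by simp
qed

lemma CLip0: "0 \<le> CLip"
proof -
  have "\<bar>f s1 (0::real^'d) - f s1 (vec 1)\<bar> \<le> CLip * l1norm ((0::real^'d) - vec 1)" by (rule f_Lip[OF s1])
  moreover have "l1norm (0 - vec 1 :: real^'d) = real CARD('d)" by (simp add: l1norm_def)
  ultimately have "0 \<le> CLip * real CARD('d)" by (smt (verit))
  then show ?thesis by (simp add: zero_le_mult_iff)
qed

lemma f_cont: "s \<in> S \<Longrightarrow> continuous_on UNIV (f s)"
proof -
  assume s: "s \<in> S"
  have "lipschitz_on (CLip * real CARD('d)) UNIV (f s)"
  proof (rule lipschitz_onI)
    fix x y :: "real^'d"
    have "dist (f s x) (f s y) \<le> CLip * l1norm (x - y)" using f_Lip[OF s] by (simp add: dist_real_def)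
    also have "\<dots> \<le> CLip * (real CARD('d) * norm (x - y))"
      by (intro mult_left_mono l1norm_le_norm CLip0)
    finally show "dist (f s x) (f s y) \<le> CLip * real CARD('d) * dist x y" by (simp add: dist_norm)
  qed (simp add: CLip0)
  then show ?thesis by (rule lipschitz_on_continuous_on)
qed

lemma f_meas: "s \<in> S \<Longrightarrow> X \<in> borel_measurable N \<Longrightarrow> (\<lambda>\<omega>. f s (X \<omega>)) \<in> borel_measurable N"
  using measurable_compose[OF _ borel_measurable_continuous_onI[OF f_cont]] by blast

lemma LSX_eq: "LSX \<mu> At \<epsilon> T t \<omega> = \<mu> (real_of_int t / real T) + lin (At T t) t \<omega>"
  by (simp add: LSX_def lin_def)

lemma SX_eq: "SX \<mu> A \<epsilon> u t \<omega> = \<mu> u + lin (A u) t \<omega>"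
  by (simp add: SX_def lin_def)

lemma LSXm_eq: "LSX_trunc \<mu> At \<epsilon> m T t \<omega> = \<mu> (real_of_int t / real T) + lin (\<lambda>j. if \<bar>j\<bar> < int m then At T t j else 0) t \<omega>"
  by (simp add: LSX_trunc_def lin_trunc)

lemma LSX_meas[measurable]: "LSX \<mu> At \<epsilon> T t \<in> borel_measurable M"
  unfolding LSX_eq[abs_def] by measurable

lemma SX_meas[measurable]: "SX \<mu> A \<epsilon> u t \<in> borel_measurable M"
  unfolding SX_eq[abs_def] by measurable

lemma LSXm_meas[measurable]: "LSX_trunc \<mu> At \<epsilon> m T t \<in> borel_measurable M"
  unfolding LSXm_eq[abs_def] by measurable

lemma geom_c:
  assumes "0 \<le> c"
  shows "(\<lambda>j::int. c * \<theta> ^ nat \<bar>j\<bar>) summable_on UNIV"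
    "infsum (\<lambda>j::int. c * \<theta> ^ nat \<bar>j\<bar>) UNIV \<le> c * (2 / (1 - \<theta>))"
proof -
  show "(\<lambda>j::int. c * \<theta> ^ nat \<bar>j\<bar>) summable_on UNIV"
    using geom_all(1)[OF theta] by (rule summable_on_cmult_right)
  have "infsum (\<lambda>j::int. c * \<theta> ^ nat \<bar>j\<bar>) UNIV = c * infsum (\<lambda>j::int. \<theta> ^ nat \<bar>j\<bar>) UNIV"
    by (rule infsum_cmult_right) (use geom_all(1)[OF theta] in auto)
  also have "\<dots> \<le> c * (2 / (1 - \<theta>))"
    by (intro mult_left_mono geom_all(2)[OF theta] assms)
  finally show "infsum (\<lambda>j::int. c * \<theta> ^ nat \<bar>j\<bar>) UNIV \<le> c * (2 / (1 - \<theta>))" .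
qed

lemma cA: "u \<in> {0..1} \<Longrightarrow> mnorm1 (A u j) \<le> real CARD('d) * B * \<theta> ^ nat \<bar>j\<bar>"
  using mnorm1_le[of "A u j" "B * \<theta> ^ nat \<bar>j\<bar>"] A_bound by (simp add: mult.assoc)

lemma lip_L1:
  assumes s: "s \<in> S" and [measurable]: "X \<in> borel_measurable M" "Y \<in> borel_measurable M"
    and b: "(\<integral>\<^sup>+\<omega>. ennreal (l1norm (X \<omega> - Y \<omega>)) \<partial>M) \<le> ennreal b" "0 \<le> b"
  shows "(\<integral>\<omega>. \<bar>f s (X \<omega>) - f s (Y \<omega>)\<bar> \<partial>M) \<le> CLip * b"
proof (rule integral_real_bounded)
  show "0 \<le> CLip * b" using CLip0 b by simp
  have "(\<integral>\<^sup>+\<omega>. ennreal \<bar>f s (X \<omega>) - f s (Y \<omega>)\<bar> \<partial>M) \<le> (\<integral>\<^sup>+\<omega>. ennreal CLip * ennreal (l1norm (X \<omega> - Y \<omega>)) \<partial>M)"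
    by (intro nn_integral_mono) (simp add: ennreal_mult'[symmetric] CLip0 f_Lip[OF s] ennreal_leI)
  also have "\<dots> = ennreal CLip * (\<integral>\<^sup>+\<omega>. ennreal (l1norm (X \<omega> - Y \<omega>)) \<partial>M)"
    by (rule nn_integral_cmult) measurable
  also have "\<dots> \<le> ennreal CLip * ennreal b" by (intro mult_left_mono b) auto
  also have "\<dots> = ennreal (CLip * b)" using CLip0 b(2) by (simp add: ennreal_mult)
  finally show "(\<integral>\<^sup>+\<omega>. ennreal \<bar>f s (X \<omega>) - f s (Y \<omega>)\<bar> \<partial>M) \<le> ennreal (CLip * b)" .
qed

definition Fsx :: "real \<Rightarrow> int \<Rightarrow> (int \<Rightarrow> real^'d) \<Rightarrow> real^'d" where
  "Fsx u h x = \<mu> u + infsum (\<lambda>j. A u j *v x (h - j)) UNIV"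

lemma Fsx_meas[measurable]: "Fsx u h \<in> borel_measurable PB"
  unfolding Fsx_def[abs_def] by measurable

lemma SX_Esh: "SX \<mu> A \<epsilon> u (t + h) \<omega> = Fsx u h (Esh t \<omega>)"
  by (simp add: SX_def Fsx_def Esh_def algebra_simps)

lemma mom_SX: "s \<in> S \<Longrightarrow> u \<in> {0..1} \<Longrightarrow> mom M \<delta> (\<lambda>\<omega>. f s (SX \<mu> A \<epsilon> u k \<omega>)) \<le> ennreal K"
proof -
  assume s: "s \<in> S" and u: "u \<in> {0..1}"
  have fm: "(\<lambda>x. f s (Fsx u 0 x)) \<in> borel_measurable PB" by (rule f_meas[OF s]) measurable
  have "mom M \<delta> (\<lambda>\<omega>. f s (SX \<mu> A \<epsilon> u k \<omega>)) = mom M \<delta> (\<lambda>\<omega>. f s (Fsx u 0 (Esh k \<omega>)))"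
    using SX_Esh[of u k 0] by simp
  also have "\<dots> = mom M \<delta> (\<lambda>\<omega>. f s (Fsx u 0 (Esh 0 \<omega>)))"
    by (rule Esh_mom[OF fm])
  also have "\<dots> = mom M \<delta> (\<lambda>\<omega>. f s (SX \<mu> A \<epsilon> u 0 \<omega>))"
    using SX_Esh[of u 0 0] by simp
  finally show ?thesis using mom_SX0[OF s u] by simp
qed

end

lemma mnorm1_zero[simp]: "mnorm1 (0::real^'d^'d) = 0"
  using mnorm1_le[of "0::real^'d^'d" 0] mnorm1_nonneg[of "0::real^'d^'d"] by simp

lemma arith_decay:
  fixes \<theta> \<delta> c1 K :: real and m n :: nat
  assumes th: "0 < \<theta>" "\<theta> < 1" and d: "0 < \<delta>" "\<delta> \<le> 1" and c1: "0 \<le> c1" and K: "0 \<le> K"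
    and mn: "n \<le> 2 * m + 1"
  shows "2 * ((\<theta> powr (-(m/2))) * (c1 * \<theta> ^ m) + (\<theta> powr (-(m/2))) powr (-\<delta>) * (4 * K) + (c1 * \<theta> ^ m) * (1 + K))
         \<le> 2 * (c1 + 4 * K + c1 * (1 + K)) * \<theta> powr (-\<delta>/4) * (\<theta> powr (\<delta>/4)) ^ n"
proof -
  define E where "E = \<theta> powr (\<delta> * m / 2)"
  have tm: "\<theta> ^ m = \<theta> powr m" using th by (simp add: powr_realpow)
  have e1: "(\<theta> powr (-(m/2))) * (c1 * \<theta> ^ m) = c1 * \<theta> powr (m/2)"
  proof -
    have "(\<theta> powr (-(m/2))) * \<theta> powr m = \<theta> powr (-(m/2) + m)" by (rule powr_add[symmetric])
    also have "\<dots> = \<theta> powr (m/2)" by simp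
    finally show ?thesis unfolding tm by (simp add: algebra_simps)
  qed
  have e2: "(\<theta> powr (-(m/2))) powr (-\<delta>) = E"
    unfolding E_def powr_powr by (simp add: algebra_simps)
  have dm: "\<delta> * real m \<le> real m" using d mult_right_mono[of \<delta> 1 "real m"] by simp
  have le1: "\<theta> powr (m/2) \<le> E" unfolding E_def
    using th d dm by (intro powr_mono') auto
  have le2: "\<theta> ^ m \<le> E" unfolding E_def tm
    using th d dm by (intro powr_mono') auto
  have "2 * ((\<theta> powr (-(m/2))) * (c1 * \<theta> ^ m) + (\<theta> powr (-(m/2))) powr (-\<delta>) * (4 * K) + (c1 * \<theta> ^ m) * (1 + K))
     = 2 * (c1 * \<theta> powr (m/2) + E * (4 * K) + c1 * \<theta> ^ m * (1 + K))" unfolding e1 e2 by simp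
  also have "\<dots> \<le> 2 * (c1 * E + E * (4 * K) + c1 * E * (1 + K))"
    using le1 le2 c1 K by (intro mult_left_mono add_mono mult_right_mono) auto
  also have "\<dots> = 2 * (c1 + 4 * K + c1 * (1 + K)) * E" by (simp add: algebra_simps)
  also have "E \<le> \<theta> powr (-\<delta>/4) * (\<theta> powr (\<delta>/4)) ^ n"
  proof -
    have "E \<le> \<theta> powr (\<delta> * (real n - 1) / 4)" unfolding E_def
    proof (rule powr_mono')
      have "real n - 1 \<le> 2 * real m" using mn by linarith
      then have "\<delta> * (real n - 1) \<le> \<delta> * (2 * real m)" using d by (intro mult_left_mono) auto
      then show "\<delta> * (real n - 1) / 4 \<le> \<delta> * real m / 2" by simp
    qed (use th in auto)
    also have "\<dots> = \<theta> powr (-\<delta>/4) * \<theta> powr (\<delta>/4 * n)"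
      by (simp add: powr_add[symmetric] algebra_simps diff_divide_distrib)
    also have "\<theta> powr (\<delta>/4 * n) = (\<theta> powr (\<delta>/4)) ^ n"
    proof -
      have "(\<theta> powr (\<delta>/4)) ^ n = (\<theta> powr (\<delta>/4)) powr (real n)"
        using th by (simp add: powr_realpow)
      also have "\<dots> = \<theta> powr (\<delta>/4 * n)" by (rule powr_powr)
      finally show ?thesis by simp
    qed
    finally show ?thesis .
  qed
  then have "2 * (c1 + 4 * K + c1 * (1 + K)) * E \<le> 2 * (c1 + 4 * K + c1 * (1 + K)) * (\<theta> powr (-\<delta>/4) * (\<theta> powr (\<delta>/4)) ^ n)"
    using c1 K by (intro mult_left_mono) auto
  finally show ?thesis by (simp add: mult.assoc)
qed

context main
begin

lemma trunc_L1:
  assumes s: "s \<in> S" and t: "1 \<le> t" "t \<le> int T"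
  shows "(\<integral>\<omega>. \<bar>f s (LSX \<mu> At \<epsilon> T t \<omega>) - f s (LSX_trunc \<mu> At \<epsilon> m T t \<omega>)\<bar> \<partial>M)
           \<le> CLip * (m1 * (B * (2 * \<theta> ^ m / (1 - \<theta>))))"
proof (rule lip_L1[OF s])
  let ?c = "At T t" and ?c' = "\<lambda>j. if \<bar>j\<bar> < int m then At T t j else 0"
  let ?\<gamma> = "\<lambda>j::int. B * (if int m \<le> \<bar>j\<bar> then \<theta> ^ nat \<bar>j\<bar> else 0)"
  have g: "?\<gamma> summable_on UNIV" by (rule summable_on_cmult_right) (rule geom_tail(1)[OF theta])
  have gi: "infsum ?\<gamma> UNIV \<le> B * (2 * \<theta> ^ m / (1 - \<theta>))"
  proof -
    have "infsum ?\<gamma> UNIV = B * infsum (\<lambda>j::int. if int m \<le> \<bar>j\<bar> then \<theta> ^ nat \<bar>j\<bar> else 0) UNIV"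
      by (rule infsum_cmult_right) (use geom_tail(1)[OF theta] in auto)
    also have "\<dots> \<le> B * (2 * \<theta> ^ m / (1 - \<theta>))"
      by (intro mult_left_mono geom_tail(2)[OF theta] B0)
    finally show ?thesis .
  qed
  have cb: "mnorm1 (?c j) \<le> B * \<theta> ^ nat \<bar>j\<bar>" for j using At_bound t by blast
  have cb': "mnorm1 (?c' j) \<le> B * \<theta> ^ nat \<bar>j\<bar>" for j
    using cb[of j] B0 theta by auto
  have cg: "mnorm1 (?c j - ?c' j) \<le> ?\<gamma> j" for j
    using cb[of j] by auto
  have bs: "(\<lambda>j::int. B * \<theta> ^ nat \<bar>j\<bar>) summable_on UNIV" by (rule geom_c(1)[OF B0])
  have "(\<integral>\<^sup>+\<omega>. ennreal (l1norm (LSX \<mu> At \<epsilon> T t \<omega> - LSX_trunc \<mu> At \<epsilon> m T t \<omega>)) \<partial>M)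
      = (\<integral>\<^sup>+\<omega>. ennreal (l1norm (lin ?c t \<omega> - lin ?c' t \<omega>)) \<partial>M)"
    unfolding LSX_eq LSXm_eq by simp
  also have "\<dots> \<le> ennreal (m1 * infsum ?\<gamma> UNIV)"
    by (rule lin_diff_nn[OF cb bs cb' bs cg g])
  also have "\<dots> \<le> ennreal (m1 * (B * (2 * \<theta> ^ m / (1 - \<theta>))))"
    by (intro ennreal_leI mult_left_mono gi m1_nonneg)
  finally show "(\<integral>\<^sup>+\<omega>. ennreal (l1norm (LSX \<mu> At \<epsilon> T t \<omega> - LSX_trunc \<mu> At \<epsilon> m T t \<omega>)) \<partial>M)
      \<le> ennreal (m1 * (B * (2 * \<theta> ^ m / (1 - \<theta>))))" .
  show "0 \<le> m1 * (B * (2 * \<theta> ^ m / (1 - \<theta>)))"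
    using m1_nonneg B0 theta by simp
qed measurable

lemma LSXm_restrict:
  "LSX_trunc \<mu> At \<epsilon> m T t \<omega> = \<mu> (real_of_int t / real T) +
     (\<Sum>j\<in>{j. \<bar>j\<bar> < int m}. At T t j *v (restrict (\<lambda>i. \<epsilon> i \<omega>) {i. \<bar>t - i\<bar> < int m}) (t - j))"
  unfolding LSX_trunc_def by (intro arg_cong2[where f="(+)"] refl sum.cong) auto

lemma trunc_indep:
  assumes t: "1 \<le> t" "t \<le> int T" and th: "1 \<le> t + h" "t + h \<le> int T" and m: "2 * int m \<le> \<bar>h\<bar>"
  shows "Cov M (\<lambda>\<omega>. f s1 (LSX_trunc \<mu> At \<epsilon> m T t \<omega>)) (\<lambda>\<omega>. f s2 (LSX_trunc \<mu> At \<epsilon> m T (t + h) \<omega>)) = 0"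
proof -
  define I1 where "I1 = {i. \<bar>t - i\<bar> < int m}"
  define I2 where "I2 = {i. \<bar>t + h - i\<bar> < int m}"
  define g1 where "g1 x = f s1 (\<mu> (real_of_int t / real T) + (\<Sum>j\<in>{j. \<bar>j\<bar> < int m}. At T t j *v x (t - j)))" for x
  define g2 where "g2 x = f s2 (\<mu> (real_of_int (t + h) / real T) + (\<Sum>j\<in>{j. \<bar>j\<bar> < int m}. At T (t + h) j *v x (t + h - j)))" for x
  have e1: "f s1 (LSX_trunc \<mu> At \<epsilon> m T t \<omega>) = g1 (restrict (\<lambda>i. \<epsilon> i \<omega>) I1)" for \<omega>
    unfolding g1_def I1_def LSXm_restrict ..
  have e2: "f s2 (LSX_trunc \<mu> At \<epsilon> m T (t + h) \<omega>) = g2 (restrict (\<lambda>i. \<epsilon> i \<omega>) I2)" for \<omega>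
    unfolding g2_def I2_def LSXm_restrict ..
  have disj: "I1 \<inter> I2 = {}" unfolding I1_def I2_def using m by auto
  have cm: "(\<lambda>x::int \<Rightarrow> real^'d. x i) \<in> borel_measurable (PiM I (\<lambda>_. borel))" if "i \<in> I" for i I
    using measurable_component_singleton[OF that, of "\<lambda>_. borel"] by simp
  have m1: "g1 \<in> borel_measurable (PiM I1 (\<lambda>_. borel))" unfolding g1_def
    by (intro f_meas[OF s1] borel_measurable_add borel_measurable_const borel_measurable_sum borel_measurable_mv cm)
       (auto simp: I1_def)
  have m2: "g2 \<in> borel_measurable (PiM I2 (\<lambda>_. borel))" unfolding g2_def
    by (intro f_meas[OF s2] borel_measurable_add borel_measurable_const borel_measurable_sum borel_measurable_mv cm)
       (auto simp: I2_def)
  have i1: "integrable M (\<lambda>\<omega>. f s1 (LSX_trunc \<mu> At \<epsilon> m T t \<omega>))"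
    by (rule mom_facts(3)[OF _ mom_Xm[OF s1 t] K0 delta(1)]) (intro f_meas[OF s1] LSXm_meas)
  have i2: "integrable M (\<lambda>\<omega>. f s2 (LSX_trunc \<mu> At \<epsilon> m T (t + h) \<omega>))"
    by (rule mom_facts(3)[OF _ mom_Xm[OF s2 th] K0 delta(1)]) (intro f_meas[OF s2] LSXm_meas)
  show ?thesis unfolding e1 e2
    by (rule cov_indep[OF disj m1 m2]) (use i1 i2 in \<open>simp_all only: e1 e2\<close>)
qed

end

context main
begin

definition "c1 = CLip * m1 * B * 2 / (1 - \<theta>)"
definition "qq = \<theta> powr (\<delta>/4)"
definition "Cd = 2 * (c1 + 4 * K + c1 * (1 + K)) * \<theta> powr (-\<delta>/4)"

lemma c1_nonneg: "0 \<le> c1"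
  unfolding c1_def using CLip0 m1_nonneg B0 theta by simp

lemma Cd_nonneg: "0 \<le> Cd"
  unfolding Cd_def using c1_nonneg K0 by simp

lemma qq: "0 < qq" "qq < 1"
  unfolding qq_def using theta delta powr_less_mono2[of "\<delta>/4" \<theta> 1] by auto

abbreviation "Phi \<eta> R \<equiv> R * \<eta> + R powr (-\<delta>) * (4 * K) + \<eta> * (1 + K)"

lemma YZ_facts:
  assumes s: "s \<in> S"
  shows "(\<lambda>\<omega>. f s (LSX \<mu> At \<epsilon> T t \<omega>)) \<in> borel_measurable M"
    "(\<lambda>\<omega>. f s (LSX_trunc \<mu> At \<epsilon> m T t \<omega>)) \<in> borel_measurable M"
    "(\<lambda>\<omega>. f s (SX \<mu> A \<epsilon> u t \<omega>)) \<in> borel_measurable M"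
  by (intro f_meas[OF s], measurable)+

lemma cov_decay:
  assumes t: "1 \<le> t" "t \<le> int T" and th: "1 \<le> t + h" "t + h \<le> int T"
  shows "\<bar>Cov M (\<lambda>\<omega>. f s1 (LSX \<mu> At \<epsilon> T t \<omega>)) (\<lambda>\<omega>. f s2 (LSX \<mu> At \<epsilon> T (t + h) \<omega>))\<bar> \<le> Cd * qq ^ nat \<bar>h\<bar>"
proof -
  define m where "m = nat \<bar>h\<bar> div 2"
  have m2: "2 * int m \<le> \<bar>h\<bar>" unfolding m_def by linarith
  have mn: "nat \<bar>h\<bar> \<le> 2 * m + 1" unfolding m_def by linarith
  define \<eta> where "\<eta> = c1 * \<theta> ^ m"
  define R where "R = \<theta> powr (-(m/2))"
  have R: "0 < R" unfolding R_def using theta by simp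
  have eta_eq: "CLip * (m1 * (B * (2 * \<theta> ^ m / (1 - \<theta>)))) = \<eta>"
    unfolding \<eta>_def c1_def by (simp add: field_simps)
  let ?Y = "\<lambda>\<omega>. f s1 (LSX \<mu> At \<epsilon> T t \<omega>)" and ?Y' = "\<lambda>\<omega>. f s1 (LSX_trunc \<mu> At \<epsilon> m T t \<omega>)"
  let ?Z = "\<lambda>\<omega>. f s2 (LSX \<mu> At \<epsilon> T (t + h) \<omega>)" and ?Z' = "\<lambda>\<omega>. f s2 (LSX_trunc \<mu> At \<epsilon> m T (t + h) \<omega>)"
  have d1: "\<bar>Cov M ?Y ?Z - Cov M ?Y' ?Z\<bar> \<le> Phi \<eta> R"
    by (rule cov_perturb[OF YZ_facts(1)[OF s1] mom_X[OF s1 t] YZ_facts(2)[OF s1] mom_Xm[OF s1 t]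
          YZ_facts(1)[OF s2] mom_X[OF s2 th] K0 delta(1) R])
       (use trunc_L1[OF s1 t, of m] eta_eq in simp)
  have d2: "\<bar>Cov M ?Z ?Y' - Cov M ?Z' ?Y'\<bar> \<le> Phi \<eta> R"
    by (rule cov_perturb[OF YZ_facts(1)[OF s2] mom_X[OF s2 th] YZ_facts(2)[OF s2] mom_Xm[OF s2 th]
          YZ_facts(2)[OF s1] mom_Xm[OF s1 t] K0 delta(1) R])
       (use trunc_L1[OF s2 th, of m] eta_eq in simp)
  have z: "Cov M ?Y' ?Z' = 0" by (rule trunc_indep[OF t th m2])
  have "\<bar>Cov M ?Y ?Z\<bar> \<le> 2 * Phi \<eta> R"
    using d1 d2 z Cov_sym[of M ?Y' ?Z] Cov_sym[of M ?Y' ?Z'] by (smt (verit))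
  also have "\<dots> \<le> Cd * qq ^ nat \<bar>h\<bar>"
    using arith_decay[OF theta delta(1) _ c1_nonneg K0 mn] delta(2)
    unfolding \<eta>_def R_def Cd_def qq_def by (simp add: mult.assoc)
  finally show ?thesis .
qed

end

context main
begin

definition "Lmu = (SOME L. 0 \<le> L \<and> (\<forall>u v. u \<in> {0..1} \<longrightarrow> v \<in> {0..1} \<longrightarrow> l1norm (\<mu> u - \<mu> v) \<le> L * \<bar>u - v\<bar>))"

lemma Lmu: "0 \<le> Lmu" "u \<in> {0..1} \<Longrightarrow> v \<in> {0..1} \<Longrightarrow> l1norm (\<mu> u - \<mu> v) \<le> Lmu * \<bar>u - v\<bar>"
proof -
  obtain L where "0 \<le> L" "\<And>u v. u \<in> {0..1} \<Longrightarrow> v \<in> {0..1} \<Longrightarrow> l1norm (\<mu> u - \<mu> v) \<le> L * \<bar>u - v\<bar>"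
    using mu_lip[OF mu_C1] by blast
  then have ex: "\<exists>L. 0 \<le> L \<and> (\<forall>u v. u \<in> {0..1} \<longrightarrow> v \<in> {0..1} \<longrightarrow> l1norm (\<mu> u - \<mu> v) \<le> L * \<bar>u - v\<bar>)" by blast
  from someI_ex[OF ex] show "0 \<le> Lmu" "u \<in> {0..1} \<Longrightarrow> v \<in> {0..1} \<Longrightarrow> l1norm (\<mu> u - \<mu> v) \<le> Lmu * \<bar>u - v\<bar>"
    unfolding Lmu_def by blast+
qed

definition "etaT h T = CLip * (Lmu * \<bar>real_of_int h\<bar> / real T + m1 * ((B + real CARD('d) * B * \<bar>real_of_int h\<bar>) / real T) * (2 / (1 - \<theta>)))"

lemma etaT_nonneg: "0 \<le> etaT h T"
  unfolding etaT_def using CLip0 Lmu(1) m1_nonneg B0 theta by (intro mult_nonneg_nonneg add_nonneg_nonneg) auto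

lemma At_A': "1 \<le> t \<Longrightarrow> t \<le> int T \<Longrightarrow> mnorm1 (At T t j - A (real_of_int t / real T) j) \<le> (B / real T) * \<theta> ^ nat \<bar>j\<bar>"
proof -
  assume t: "1 \<le> t" "t \<le> int T"
  then have T: "0 < real T" by linarith
  show ?thesis using At_A[OF t, of j] T by (simp add: pos_le_divide_eq mult.commute)
qed

lemma uT: "1 \<le> t \<Longrightarrow> t \<le> int T \<Longrightarrow> real_of_int t / real T \<in> {0..1}"
  by (auto simp: divide_le_eq_1)

lemma approx_Y:
  assumes s: "s \<in> S" and t: "1 \<le> t" "t \<le> int T"
  shows "(\<integral>\<omega>. \<bar>f s (LSX \<mu> At \<epsilon> T t \<omega>) - f s (SX \<mu> A \<epsilon> (real_of_int t / real T) t \<omega>)\<bar> \<partial>M) \<le> etaT h T"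
proof -
  let ?u = "real_of_int t / real T"
  have T: "0 < real T" using t by linarith
  have cB: "0 \<le> B / real T" using B0 T by simp
  have "(\<integral>\<omega>. \<bar>f s (LSX \<mu> At \<epsilon> T t \<omega>) - f s (SX \<mu> A \<epsilon> ?u t \<omega>)\<bar> \<partial>M) \<le> CLip * (m1 * ((B / real T) * (2 / (1 - \<theta>))))"
  proof (rule lip_L1[OF s])
    have "(\<integral>\<^sup>+\<omega>. ennreal (l1norm (LSX \<mu> At \<epsilon> T t \<omega> - SX \<mu> A \<epsilon> ?u t \<omega>)) \<partial>M)
        = (\<integral>\<^sup>+\<omega>. ennreal (l1norm (lin (At T t) t \<omega> - lin (A ?u) t \<omega>)) \<partial>M)"
      unfolding LSX_eq SX_eq by simp
    also have "\<dots> \<le> ennreal (m1 * infsum (\<lambda>j::int. (B / real T) * \<theta> ^ nat \<bar>j\<bar>) UNIV)"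
      by (rule lin_diff_nn[OF At_bound[OF t] geom_c(1)[OF B0] cA[OF uT[OF t]]
            geom_c(1) At_A'[OF t] geom_c(1)[OF cB]]) (use B0 in simp)
    also have "\<dots> \<le> ennreal (m1 * ((B / real T) * (2 / (1 - \<theta>))))"
      by (intro ennreal_leI mult_left_mono geom_c(2)[OF cB] m1_nonneg)
    finally show "(\<integral>\<^sup>+\<omega>. ennreal (l1norm (LSX \<mu> At \<epsilon> T t \<omega> - SX \<mu> A \<epsilon> ?u t \<omega>)) \<partial>M)
        \<le> ennreal (m1 * ((B / real T) * (2 / (1 - \<theta>))))" .
    show "0 \<le> m1 * ((B / real T) * (2 / (1 - \<theta>)))" using m1_nonneg cB theta by (intro mult_nonneg_nonneg) auto
  qed measurable
  also have "\<dots> \<le> etaT h T"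
  proof -
    have "m1 * ((B / real T) * (2 / (1 - \<theta>))) \<le> Lmu * \<bar>real_of_int h\<bar> / real T + m1 * ((B + real CARD('d) * B * \<bar>real_of_int h\<bar>) / real T) * (2 / (1 - \<theta>))"
    proof -
      have "B / real T \<le> (B + real CARD('d) * B * \<bar>real_of_int h\<bar>) / real T"
        using T B0 by (intro divide_right_mono) auto
      then have "m1 * ((B / real T) * (2 / (1 - \<theta>))) \<le> m1 * ((B + real CARD('d) * B * \<bar>real_of_int h\<bar>) / real T) * (2 / (1 - \<theta>))"
      proof -
        have k0: "0 \<le> 2 / (1 - \<theta>)" using theta by simp
        from mult_left_mono[OF mult_right_mono[OF \<open>B / real T \<le> _\<close> k0] m1_nonneg]
        show ?thesis by (simp only: mult.assoc)
      qed
      moreover have "0 \<le> Lmu * \<bar>real_of_int h\<bar> / real T" using Lmu(1) T by simp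
      ultimately show ?thesis by linarith
    qed
    then show ?thesis unfolding etaT_def using CLip0 by (rule mult_left_mono)
  qed
  finally show ?thesis .
qed

lemma approx_Z:
  assumes s: "s \<in> S" and t: "1 \<le> t" "t \<le> int T" and th: "1 \<le> t + h" "t + h \<le> int T"
  shows "(\<integral>\<omega>. \<bar>f s (LSX \<mu> At \<epsilon> T (t + h) \<omega>) - f s (SX \<mu> A \<epsilon> (real_of_int t / real T) (t + h) \<omega>)\<bar> \<partial>M) \<le> etaT h T"
proof -
  let ?u = "real_of_int t / real T" and ?v = "real_of_int (t + h) / real T"
  have T: "0 < real T" using t by linarith
  have u: "?u \<in> {0..1}" by (rule uT[OF t]) 
  have v: "?v \<in> {0..1}" by (rule uT[OF th])
  have vu: "\<bar>?v - ?u\<bar> = \<bar>real_of_int h\<bar> / real T"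
    using T by (simp add: diff_divide_distrib[symmetric])
  define c where "c = (B + real CARD('d) * B * \<bar>real_of_int h\<bar>) / real T"
  have c0: "0 \<le> c" unfolding c_def using B0 T by simp
  have cb: "mnorm1 (At T (t + h) j - A ?u j) \<le> c * \<theta> ^ nat \<bar>j\<bar>" for j
  proof -
    have "At T (t + h) j - A ?u j = (At T (t + h) j - A ?v j) + (A ?v j - A ?u j)" by simp
    then have "mnorm1 (At T (t + h) j - A ?u j) \<le> mnorm1 (At T (t + h) j - A ?v j) + mnorm1 (A ?v j - A ?u j)"
      by (metis mnorm1_add)
    also have "\<dots> \<le> (B / real T) * \<theta> ^ nat \<bar>j\<bar> + real CARD('d) * ((B * \<theta> ^ nat \<bar>j\<bar>) * \<bar>?v - ?u\<bar>)"
      by (intro add_mono At_A'[OF th] A_lip[OF A_C1 v u])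
    also have "\<dots> = c * \<theta> ^ nat \<bar>j\<bar>" unfolding vu c_def by (simp add: add_divide_distrib algebra_simps)
    finally show ?thesis .
  qed
  let ?b = "Lmu * \<bar>real_of_int h\<bar> / real T + m1 * c * (2 / (1 - \<theta>))"
  have "(\<integral>\<omega>. \<bar>f s (LSX \<mu> At \<epsilon> T (t + h) \<omega>) - f s (SX \<mu> A \<epsilon> ?u (t + h) \<omega>)\<bar> \<partial>M) \<le> CLip * ?b"
  proof (rule lip_L1[OF s])
    have "(\<integral>\<^sup>+\<omega>. ennreal (l1norm (LSX \<mu> At \<epsilon> T (t + h) \<omega> - SX \<mu> A \<epsilon> ?u (t + h) \<omega>)) \<partial>M)
        \<le> (\<integral>\<^sup>+\<omega>. ennreal (l1norm (\<mu> ?v - \<mu> ?u)) + ennreal (l1norm (lin (At T (t + h)) (t + h) \<omega> - lin (A ?u) (t + h) \<omega>)) \<partial>M)"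
    proof (rule nn_integral_mono)
      fix \<omega>
      have "LSX \<mu> At \<epsilon> T (t + h) \<omega> - SX \<mu> A \<epsilon> ?u (t + h) \<omega> = (\<mu> ?v - \<mu> ?u) + (lin (At T (t + h)) (t + h) \<omega> - lin (A ?u) (t + h) \<omega>)"
        unfolding LSX_eq SX_eq by simp
      then have "l1norm (LSX \<mu> At \<epsilon> T (t + h) \<omega> - SX \<mu> A \<epsilon> ?u (t + h) \<omega>) \<le> l1norm (\<mu> ?v - \<mu> ?u) + l1norm (lin (At T (t + h)) (t + h) \<omega> - lin (A ?u) (t + h) \<omega>)"
        by (metis l1norm_add)
      then show "ennreal (l1norm (LSX \<mu> At \<epsilon> T (t + h) \<omega> - SX \<mu> A \<epsilon> ?u (t + h) \<omega>)) \<le> ennreal (l1norm (\<mu> ?v - \<mu> ?u)) + ennreal (l1norm (lin (At T (t + h)) (t + h) \<omega> - lin (A ?u) (t + h) \<omega>))"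
        by (simp add: ennreal_plus[symmetric] l1norm_nonneg del: ennreal_plus)
    qed
    also have "\<dots> = ennreal (l1norm (\<mu> ?v - \<mu> ?u)) + (\<integral>\<^sup>+\<omega>. ennreal (l1norm (lin (At T (t + h)) (t + h) \<omega> - lin (A ?u) (t + h) \<omega>)) \<partial>M)"
      by (subst nn_integral_add) (auto simp: emeasure_space_1)
    also have "\<dots> \<le> ennreal (Lmu * \<bar>real_of_int h\<bar> / real T) + ennreal (m1 * (c * (2 / (1 - \<theta>))))"
    proof (rule add_mono)
      show "ennreal (l1norm (\<mu> ?v - \<mu> ?u)) \<le> ennreal (Lmu * \<bar>real_of_int h\<bar> / real T)"
        using Lmu(2)[OF v u] vu by (intro ennreal_leI) simp
      have "(\<integral>\<^sup>+\<omega>. ennreal (l1norm (lin (At T (t + h)) (t + h) \<omega> - lin (A ?u) (t + h) \<omega>)) \<partial>M)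
          \<le> ennreal (m1 * infsum (\<lambda>j::int. c * \<theta> ^ nat \<bar>j\<bar>) UNIV)"
        by (rule lin_diff_nn[OF At_bound[OF th] geom_c(1)[OF B0] cA[OF u] geom_c(1) cb geom_c(1)[OF c0]]) (use B0 in simp)
      also have "\<dots> \<le> ennreal (m1 * (c * (2 / (1 - \<theta>))))"
        by (intro ennreal_leI mult_left_mono geom_c(2)[OF c0] m1_nonneg)
      finally show "(\<integral>\<^sup>+\<omega>. ennreal (l1norm (lin (At T (t + h)) (t + h) \<omega> - lin (A ?u) (t + h) \<omega>)) \<partial>M)
          \<le> ennreal (m1 * (c * (2 / (1 - \<theta>))))" .
    qed
    also have "\<dots> = ennreal ?b"
      using Lmu(1) T m1_nonneg c0 theta by (subst ennreal_plus[symmetric]) (auto simp: mult.assoc)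
    finally show "(\<integral>\<^sup>+\<omega>. ennreal (l1norm (LSX \<mu> At \<epsilon> T (t + h) \<omega> - SX \<mu> A \<epsilon> ?u (t + h) \<omega>)) \<partial>M) \<le> ennreal ?b" .
    show "0 \<le> ?b" using Lmu(1) T m1_nonneg c0 theta by (intro add_nonneg_nonneg mult_nonneg_nonneg) auto
  qed measurable
  also have "CLip * ?b = etaT h T" unfolding etaT_def c_def by simp
  finally show ?thesis .
qed

lemma cov_approx:
  assumes t: "1 \<le> t" "t \<le> int T" and th: "1 \<le> t + h" "t + h \<le> int T" and R: "0 < R"
  shows "\<bar>Cov M (\<lambda>\<omega>. f s1 (LSX \<mu> At \<epsilon> T t \<omega>)) (\<lambda>\<omega>. f s2 (LSX \<mu> At \<epsilon> T (t + h) \<omega>))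
          - Cov M (\<lambda>\<omega>. f s1 (SX \<mu> A \<epsilon> (real_of_int t / real T) 0 \<omega>)) (\<lambda>\<omega>. f s2 (SX \<mu> A \<epsilon> (real_of_int t / real T) h \<omega>))\<bar>
         \<le> 2 * Phi (etaT h T) R"
proof -
  let ?u = "real_of_int t / real T"
  have u: "?u \<in> {0..1}" by (rule uT[OF t])
  let ?Y = "\<lambda>\<omega>. f s1 (LSX \<mu> At \<epsilon> T t \<omega>)" and ?Yt = "\<lambda>\<omega>. f s1 (SX \<mu> A \<epsilon> ?u t \<omega>)"
  let ?Z = "\<lambda>\<omega>. f s2 (LSX \<mu> At \<epsilon> T (t + h) \<omega>)" and ?Zt = "\<lambda>\<omega>. f s2 (SX \<mu> A \<epsilon> ?u (t + h) \<omega>)"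
  have d1: "\<bar>Cov M ?Y ?Z - Cov M ?Yt ?Z\<bar> \<le> Phi (etaT h T) R"
    by (rule cov_perturb[OF YZ_facts(1)[OF s1] mom_X[OF s1 t] YZ_facts(3)[OF s1] mom_SX[OF s1 u]
          YZ_facts(1)[OF s2] mom_X[OF s2 th] K0 delta(1) R approx_Y[OF s1 t]])
  have d2: "\<bar>Cov M ?Z ?Yt - Cov M ?Zt ?Yt\<bar> \<le> Phi (etaT h T) R"
    by (rule cov_perturb[OF YZ_facts(1)[OF s2] mom_X[OF s2 th] YZ_facts(3)[OF s2] mom_SX[OF s2 u]
          YZ_facts(3)[OF s1] mom_SX[OF s1 u] K0 delta(1) R approx_Z[OF s2 t th]])
  have st: "Cov M ?Yt ?Zt = Cov M (\<lambda>\<omega>. f s1 (SX \<mu> A \<epsilon> ?u 0 \<omega>)) (\<lambda>\<omega>. f s2 (SX \<mu> A \<epsilon> ?u h \<omega>))"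
  proof -
    have F1: "(\<lambda>x. f s1 (Fsx ?u 0 x)) \<in> borel_measurable PB" by (rule f_meas[OF s1]) measurable
    have F2: "(\<lambda>x. f s2 (Fsx ?u h x)) \<in> borel_measurable PB" by (rule f_meas[OF s2]) measurable
    have a: "?Yt = (\<lambda>\<omega>. f s1 (Fsx ?u 0 (Esh t \<omega>)))" using SX_Esh[of ?u t 0] by simp
    have b: "?Zt = (\<lambda>\<omega>. f s2 (Fsx ?u h (Esh t \<omega>)))" using SX_Esh[of ?u t h] by simp
    have c: "(\<lambda>\<omega>. f s1 (SX \<mu> A \<epsilon> ?u 0 \<omega>)) = (\<lambda>\<omega>. f s1 (Fsx ?u 0 (Esh 0 \<omega>)))" using SX_Esh[of ?u 0 0] by simp
    have d: "(\<lambda>\<omega>. f s2 (SX \<mu> A \<epsilon> ?u h \<omega>)) = (\<lambda>\<omega>. f s2 (Fsx ?u h (Esh 0 \<omega>)))" using SX_Esh[of ?u 0 h] by simp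
    show ?thesis unfolding a b c d by (rule Esh_Cov[OF F1 F2])
  qed
  show ?thesis
    using d1 d2 st Cov_sym[of M ?Yt ?Z] Cov_sym[of M ?Yt ?Zt] by (smt (verit))
qed

end

lemma cs_int:
  fixes \<phi> :: "int \<Rightarrow> real"
  assumes "(\<lambda>h. \<bar>\<phi> h\<bar>) summable_on UNIV"
  shows "integrable (count_space UNIV) \<phi>" "integral\<^sup>L (count_space UNIV) \<phi> = infsum \<phi> UNIV"
proof -
  have a: "(\<lambda>h. norm (\<phi> h)) summable_on UNIV" using assms by simp
  have b: "Infinite_Set_Sum.abs_summable_on \<phi> UNIV"
    using abs_summable_equivalent[of \<phi> UNIV] a by simp
  then show "integrable (count_space UNIV) \<phi>" unfolding Infinite_Set_Sum.abs_summable_on_def .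
  show "integral\<^sup>L (count_space UNIV) \<phi> = infsum \<phi> UNIV"
    using infsetsum_infsum[OF b] unfolding infsetsum_def .
qed

lemma tannery:
  fixes g :: "nat \<Rightarrow> int \<Rightarrow> real" and Lf \<beta> :: "int \<Rightarrow> real"
  assumes bs: "\<beta> summable_on UNIV" and gb: "\<And>T h. \<bar>g T h\<bar> \<le> \<beta> h"
    and lim: "\<And>h. (\<lambda>T. g T h) \<longlonglongrightarrow> Lf h"
  shows "Lf summable_on UNIV" "(\<lambda>T. infsum (g T) UNIV) \<longlonglongrightarrow> infsum Lf UNIV"
proof -
  have b0: "0 \<le> \<beta> h" for h using gb[of 0 h] by linarith
  have Lb: "\<bar>Lf h\<bar> \<le> \<beta> h" for h
  proof -
    have "(\<lambda>T. \<bar>g T h\<bar>) \<longlonglongrightarrow> \<bar>Lf h\<bar>" by (rule tendsto_rabs[OF lim])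
    then show ?thesis by (rule LIMSEQ_le_const2) (use gb in auto)
  qed
  have aL: "(\<lambda>h. \<bar>Lf h\<bar>) summable_on UNIV"
    by (rule summable_on_comparison_test[OF bs]) (use Lb in auto)
  have ag: "(\<lambda>h. \<bar>g T h\<bar>) summable_on UNIV" for T
    by (rule summable_on_comparison_test[OF bs]) (use gb in auto)
  have ab: "(\<lambda>h. \<bar>\<beta> h\<bar>) summable_on UNIV" using bs b0 by simp
  show "Lf summable_on UNIV" using aL summable_on_iff_abs_summable_on_real[of Lf UNIV] by simp
  have "(\<lambda>T. integral\<^sup>L (count_space UNIV) (g T)) \<longlonglongrightarrow> integral\<^sup>L (count_space UNIV) Lf"
    by (rule integral_dominated_convergence[where w=\<beta>]) (use cs_int(1)[OF ab] lim gb in auto)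
  then show "(\<lambda>T. infsum (g T) UNIV) \<longlonglongrightarrow> infsum Lf UNIV"
    using cs_int(2)[OF ag] cs_int(2)[OF aL] by simp
qed

lemma weights_sq:
  fixes w :: "int \<Rightarrow> real" and d :: nat and Cw :: real and T :: nat
  assumes w0: "\<And>t. 0 \<le> w t" and ws: "\<And>t. t < 1 \<or> t > int T \<Longrightarrow> w t = 0"
    and d: "d = card {t. 0 < w t}" and wb: "\<And>t. w t \<le> Cw / sqrt (real d)"
  shows "(\<Sum>t\<in>{1..int T}. (w t)\<^sup>2) \<le> Cw\<^sup>2"
proof -
  let ?P = "{t. 0 < w t}"
  have sub: "?P \<subseteq> {1..int T}" using ws by (force simp: not_less)
  have finP: "finite ?P" using sub by (rule finite_subset) simp
  have z: "\<forall>i\<in>{1..int T} - ?P. (w i)\<^sup>2 = 0"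
  proof
    fix i assume "i \<in> {1..int T} - ?P"
    then have "\<not> 0 < w i" by simp
    with w0[of i] have "w i = 0" by linarith
    then show "(w i)\<^sup>2 = 0" by simp
  qed
  have "(\<Sum>t\<in>{1..int T}. (w t)\<^sup>2) = (\<Sum>t\<in>?P. (w t)\<^sup>2)"
    by (rule sum.mono_neutral_right[OF _ sub z]) simp
  also have "\<dots> \<le> (\<Sum>t\<in>?P. (Cw / sqrt (real d))\<^sup>2)"
    by (intro sum_mono power_mono wb) (use w0 in auto)
  also have "\<dots> = real d * (Cw / sqrt (real d))\<^sup>2" unfolding d by (simp only: sum_constant)
  also have "\<dots> \<le> Cw\<^sup>2"
  proof (cases "d = 0")
    case True then show ?thesis by simp
  next
    case False
    then have "real d * (Cw / sqrt (real d))\<^sup>2 = Cw\<^sup>2" by (simp add: power_divide)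
    then show ?thesis by simp
  qed
  finally show ?thesis .
qed

lemma weights_prod:
  fixes w :: "int \<Rightarrow> real" and d :: nat and Cw :: real and T :: nat
  assumes w0: "\<And>t. 0 \<le> w t" and ws: "\<And>t. t < 1 \<or> t > int T \<Longrightarrow> w t = 0"
    and d: "d = card {t. 0 < w t}" and wb: "\<And>t. w t \<le> Cw / sqrt (real d)"
  shows "(\<Sum>t\<in>{1..int T}. w t * w (t + h)) \<le> Cw\<^sup>2"
proof -
  have sq: "(\<Sum>t\<in>{1..int T}. (w t)\<^sup>2) \<le> Cw\<^sup>2" by (rule weights_sq[OF w0 ws d wb])
  have "(\<Sum>t\<in>{1..int T}. (w (t + h))\<^sup>2) = (\<Sum>s\<in>(\<lambda>t. t + h) ` {1..int T}. (w s)\<^sup>2)"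
    by (subst sum.reindex) (auto simp: inj_on_def)
  also have "\<dots> = (\<Sum>s\<in>(\<lambda>t. t + h) ` {1..int T} \<inter> {1..int T}. (w s)\<^sup>2)"
    by (rule sum.mono_neutral_right) (use ws in \<open>auto simp: not_le\<close>)
  also have "\<dots> \<le> (\<Sum>s\<in>{1..int T}. (w s)\<^sup>2)"
    by (rule sum_mono2) auto
  finally have sq2: "(\<Sum>t\<in>{1..int T}. (w (t + h))\<^sup>2) \<le> Cw\<^sup>2" using sq by linarith
  have "(\<Sum>t\<in>{1..int T}. w t * w (t + h)) \<le> (\<Sum>t\<in>{1..int T}. ((w t)\<^sup>2 + (w (t + h))\<^sup>2) / 2)"
  proof (rule sum_mono)
    fix t
    have "0 \<le> (w t - w (t + h))\<^sup>2" by simp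
    then show "w t * w (t + h) \<le> ((w t)\<^sup>2 + (w (t + h))\<^sup>2) / 2"
      by (simp add: power2_eq_square algebra_simps)
  qed
  also have "\<dots> = ((\<Sum>t\<in>{1..int T}. (w t)\<^sup>2) + (\<Sum>t\<in>{1..int T}. (w (t + h))\<^sup>2)) / 2"
    by (simp add: sum.distrib sum_divide_distrib[symmetric])
  also have "\<dots> \<le> Cw\<^sup>2" using sq sq2 by simp
  finally show ?thesis .
qed

lemma (in prob_space) Cov_sum:
  fixes U V :: "'i \<Rightarrow> 'a \<Rightarrow> real"
  assumes I: "finite I" and iU: "\<And>i. i \<in> I \<Longrightarrow> integrable M (U i)" and iV: "\<And>j. j \<in> I \<Longrightarrow> integrable M (V j)"
    and iUV: "\<And>i j. i \<in> I \<Longrightarrow> j \<in> I \<Longrightarrow> integrable M (\<lambda>\<omega>. U i \<omega> * V j \<omega>)"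
  shows "Cov M (\<lambda>\<omega>. \<Sum>i\<in>I. a i * U i \<omega>) (\<lambda>\<omega>. \<Sum>j\<in>I. b j * V j \<omega>)
       = (\<Sum>i\<in>I. \<Sum>j\<in>I. a i * b j * Cov M (U i) (V j))"
proof -
  have i1: "integrable M (\<lambda>\<omega>. \<Sum>i\<in>I. a i * U i \<omega>)" using iU by (intro Bochner_Integration.integrable_sum integrable_mult_right) auto
  have i2: "integrable M (\<lambda>\<omega>. \<Sum>j\<in>I. b j * V j \<omega>)" using iV by (intro Bochner_Integration.integrable_sum integrable_mult_right) auto
  have pe: "(\<lambda>\<omega>. (\<Sum>i\<in>I. a i * U i \<omega>) * (\<Sum>j\<in>I. b j * V j \<omega>)) = (\<lambda>\<omega>. \<Sum>i\<in>I. \<Sum>j\<in>I. a i * b j * (U i \<omega> * V j \<omega>))"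
    by (auto simp: sum_product algebra_simps)
  have i12: "integrable M (\<lambda>\<omega>. (\<Sum>i\<in>I. a i * U i \<omega>) * (\<Sum>j\<in>I. b j * V j \<omega>))"
    unfolding pe using iUV by (intro Bochner_Integration.integrable_sum integrable_mult_right) auto
  have e12: "(\<integral>\<omega>. (\<Sum>i\<in>I. a i * U i \<omega>) * (\<Sum>j\<in>I. b j * V j \<omega>) \<partial>M) = (\<Sum>i\<in>I. \<Sum>j\<in>I. a i * b j * (\<integral>\<omega>. U i \<omega> * V j \<omega> \<partial>M))"
  proof -
    have "(\<integral>\<omega>. (\<Sum>i\<in>I. \<Sum>j\<in>I. a i * b j * (U i \<omega> * V j \<omega>)) \<partial>M) = (\<Sum>i\<in>I. (\<integral>\<omega>. (\<Sum>j\<in>I. a i * b j * (U i \<omega> * V j \<omega>)) \<partial>M))"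
      by (rule Bochner_Integration.integral_sum) (auto intro!: Bochner_Integration.integrable_sum integrable_mult_right iUV)
    also have "\<dots> = (\<Sum>i\<in>I. \<Sum>j\<in>I. (\<integral>\<omega>. a i * b j * (U i \<omega> * V j \<omega>) \<partial>M))"
      by (intro sum.cong refl Bochner_Integration.integral_sum) (auto intro!: integrable_mult_right iUV)
    also have "\<dots> = (\<Sum>i\<in>I. \<Sum>j\<in>I. a i * b j * (\<integral>\<omega>. U i \<omega> * V j \<omega> \<partial>M))"
      by simp
    finally show ?thesis unfolding pe .
  qed
  have e1: "(\<integral>\<omega>. (\<Sum>i\<in>I. a i * U i \<omega>) \<partial>M) = (\<Sum>i\<in>I. a i * (\<integral>\<omega>. U i \<omega> \<partial>M))"
    using iU by (subst Bochner_Integration.integral_sum) (auto intro: integrable_mult_right)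
  have e2: "(\<integral>\<omega>. (\<Sum>j\<in>I. b j * V j \<omega>) \<partial>M) = (\<Sum>j\<in>I. b j * (\<integral>\<omega>. V j \<omega> \<partial>M))"
    using iV by (subst Bochner_Integration.integral_sum) (auto intro: integrable_mult_right)
  have "Cov M (\<lambda>\<omega>. \<Sum>i\<in>I. a i * U i \<omega>) (\<lambda>\<omega>. \<Sum>j\<in>I. b j * V j \<omega>)
      = (\<Sum>i\<in>I. \<Sum>j\<in>I. a i * b j * (\<integral>\<omega>. U i \<omega> * V j \<omega> \<partial>M)) - (\<Sum>i\<in>I. a i * (\<integral>\<omega>. U i \<omega> \<partial>M)) * (\<Sum>j\<in>I. b j * (\<integral>\<omega>. V j \<omega> \<partial>M))"
    using Cov_eq[OF i1 i2 i12] e12 e1 e2 by simp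
  also have "\<dots> = (\<Sum>i\<in>I. \<Sum>j\<in>I. a i * b j * ((\<integral>\<omega>. U i \<omega> * V j \<omega> \<partial>M) - (\<integral>\<omega>. U i \<omega> \<partial>M) * (\<integral>\<omega>. V j \<omega> \<partial>M)))"
    by (simp add: sum_product sum_subtractf[symmetric] algebra_simps)
  also have "\<dots> = (\<Sum>i\<in>I. \<Sum>j\<in>I. a i * b j * Cov M (U i) (V j))"
    using iU iV iUV by (intro sum.cong refl) (simp add: Cov_eq)
  finally show ?thesis .
qed

context main
begin

definition "gg T h = (\<Sum>t\<in>{1..int T}. w T t * w T (t + h) *
   Cov M (\<lambda>\<omega>. f s1 (LSX \<mu> At \<epsilon> T t \<omega>)) (\<lambda>\<omega>. f s2 (LSX \<mu> At \<epsilon> T (t + h) \<omega>)))"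

definition "ll T h = (\<Sum>t\<in>{1..int T}. w T t * w T (t + h) *
   Cov M (\<lambda>\<omega>. f s1 (SX \<mu> A \<epsilon> (real_of_int t / real T) 0 \<omega>)) (\<lambda>\<omega>. f s2 (SX \<mu> A \<epsilon> (real_of_int t / real T) h \<omega>)))"

lemma w_pos: "w T t \<noteq> 0 \<Longrightarrow> 1 \<le> t \<and> t \<le> int T"
  using w_support[of t T] by fastforce

lemma ww_sum: "(\<Sum>t\<in>{1..int T}. w T t * w T (t + h)) \<le> Cw\<^sup>2"
  by (rule weights_prod[OF w_nonneg w_support dT_def w_bound])

lemma ww_bound:
  assumes "\<And>t. w T t * w T (t + h) \<noteq> 0 \<Longrightarrow> \<bar>F t\<bar> \<le> X" and X: "0 \<le> X"
  shows "\<bar>\<Sum>t\<in>{1..int T}. w T t * w T (t + h) * F t\<bar> \<le> Cw\<^sup>2 * X"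
proof -
  have "\<bar>\<Sum>t\<in>{1..int T}. w T t * w T (t + h) * F t\<bar> \<le> (\<Sum>t\<in>{1..int T}. \<bar>w T t * w T (t + h) * F t\<bar>)"
    by (rule sum_abs)
  also have "\<dots> \<le> (\<Sum>t\<in>{1..int T}. w T t * w T (t + h) * X)"
  proof (rule sum_mono)
    fix t
    have ww0: "0 \<le> w T t * w T (t + h)" using w_nonneg by simp
    show "\<bar>w T t * w T (t + h) * F t\<bar> \<le> w T t * w T (t + h) * X"
    proof (cases "w T t * w T (t + h) = 0")
      case True then show ?thesis by (simp only: True)
    next
      case False
      have b: "\<bar>w T t * w T (t + h)\<bar> = w T t * w T (t + h)" using ww0 by (rule abs_of_nonneg)
      have "\<bar>w T t * w T (t + h) * F t\<bar> = w T t * w T (t + h) * \<bar>F t\<bar>"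
        unfolding abs_mult[of "w T t * w T (t + h)" "F t"] b ..
      also have "\<dots> \<le> w T t * w T (t + h) * X" by (rule mult_left_mono[OF assms(1)[OF False] ww0])
      finally show ?thesis .
    qed
  qed
  also have "\<dots> = (\<Sum>t\<in>{1..int T}. w T t * w T (t + h)) * X" by (simp add: sum_distrib_right)
  also have "\<dots> \<le> Cw\<^sup>2 * X" by (intro mult_right_mono ww_sum X)
  finally show ?thesis .
qed

lemma ww_range: "w T t * w T (t + h) \<noteq> 0 \<Longrightarrow> (1 \<le> t \<and> t \<le> int T) \<and> (1 \<le> t + h \<and> t + h \<le> int T)"
  using w_pos[of T t] w_pos[of T "t + h"] by auto

lemma gg_bound: "\<bar>gg T h\<bar> \<le> Cw\<^sup>2 * (Cd * qq ^ nat \<bar>h\<bar>)"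
  unfolding gg_def
proof (rule ww_bound)
  fix t assume "w T t * w T (t + h) \<noteq> 0"
  then have r: "1 \<le> t" "t \<le> int T" "1 \<le> t + h" "t + h \<le> int T" using ww_range by blast+
  show "\<bar>Cov M (\<lambda>\<omega>. f s1 (LSX \<mu> At \<epsilon> T t \<omega>)) (\<lambda>\<omega>. f s2 (LSX \<mu> At \<epsilon> T (t + h) \<omega>))\<bar> \<le> Cd * qq ^ nat \<bar>h\<bar>"
    by (rule cov_decay[OF r])
qed (use Cd_nonneg qq in simp)

lemma Phi_nonneg: "0 \<le> \<eta> \<Longrightarrow> 0 < R \<Longrightarrow> 0 \<le> Phi \<eta> R"
  using K0 by (intro add_nonneg_nonneg mult_nonneg_nonneg) auto

lemma gg_ll: "0 < R \<Longrightarrow> \<bar>gg T h - ll T h\<bar> \<le> Cw\<^sup>2 * (2 * Phi (etaT h T) R)"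
proof -
  assume R: "0 < R"
  have "gg T h - ll T h = (\<Sum>t\<in>{1..int T}. w T t * w T (t + h) *
      (Cov M (\<lambda>\<omega>. f s1 (LSX \<mu> At \<epsilon> T t \<omega>)) (\<lambda>\<omega>. f s2 (LSX \<mu> At \<epsilon> T (t + h) \<omega>))
       - Cov M (\<lambda>\<omega>. f s1 (SX \<mu> A \<epsilon> (real_of_int t / real T) 0 \<omega>)) (\<lambda>\<omega>. f s2 (SX \<mu> A \<epsilon> (real_of_int t / real T) h \<omega>))))"
    unfolding gg_def ll_def by (simp add: sum_subtractf[symmetric] algebra_simps)
  also have "\<bar>\<dots>\<bar> \<le> Cw\<^sup>2 * (2 * Phi (etaT h T) R)"
  proof (rule ww_bound)
    fix t assume "w T t * w T (t + h) \<noteq> 0"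
    then have r: "1 \<le> t" "t \<le> int T" "1 \<le> t + h" "t + h \<le> int T" using ww_range by blast+
    show "\<bar>Cov M (\<lambda>\<omega>. f s1 (LSX \<mu> At \<epsilon> T t \<omega>)) (\<lambda>\<omega>. f s2 (LSX \<mu> At \<epsilon> T (t + h) \<omega>))
       - Cov M (\<lambda>\<omega>. f s1 (SX \<mu> A \<epsilon> (real_of_int t / real T) 0 \<omega>)) (\<lambda>\<omega>. f s2 (SX \<mu> A \<epsilon> (real_of_int t / real T) h \<omega>))\<bar>
       \<le> 2 * Phi (etaT h T) R"
      by (rule cov_approx[OF r R])
  qed (rule mult_nonneg_nonneg[OF _ Phi_nonneg[OF etaT_nonneg R]], simp)
  finally show ?thesis .
qed

lemma etaT_lim: "(\<lambda>T. etaT h T) \<longlonglongrightarrow> 0"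
proof -
  define E0 where "E0 = CLip * (Lmu * \<bar>real_of_int h\<bar> + m1 * (B + real CARD('d) * B * \<bar>real_of_int h\<bar>) * (2 / (1 - \<theta>)))"
  have eq: "etaT h T = E0 / real T" for T
  proof -
    have aux: "m1 * ((B + real CARD('d) * B * \<bar>real_of_int h\<bar>) / real T) * k = (m1 * (B + real CARD('d) * B * \<bar>real_of_int h\<bar>) * k) / real T" for k
      by simp
    have a: "m1 * ((B + real CARD('d) * B * \<bar>real_of_int h\<bar>) / real T) * (2 / (1 - \<theta>))
        = (m1 * (B + real CARD('d) * B * \<bar>real_of_int h\<bar>) * (2 / (1 - \<theta>))) / real T"
      using aux[of "2 / (1 - \<theta>)"] .
    let ?X = "m1 * (B + real CARD('d) * B * \<bar>real_of_int h\<bar>) * (2 / (1 - \<theta>))"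
    have "etaT h T = CLip * (Lmu * \<bar>real_of_int h\<bar> / real T + ?X / real T)" unfolding etaT_def a ..
    also have "\<dots> = CLip * ((Lmu * \<bar>real_of_int h\<bar> + ?X) / real T)" by (simp only: add_divide_distrib)
    also have "\<dots> = (CLip * (Lmu * \<bar>real_of_int h\<bar> + ?X)) / real T" by (rule times_divide_eq_right)
    finally show ?thesis unfolding E0_def .
  qed
  show ?thesis unfolding eq
    by (rule tendsto_divide_0[OF tendsto_const filterlim_at_top_imp_at_infinity[OF filterlim_real_sequentially]])
qed

lemma gg_ll_lim: "(\<lambda>T. gg T h - ll T h) \<longlonglongrightarrow> 0"
proof (rule tendstoI)
  fix r :: real assume r: "0 < r"
  define c where "c = Cw\<^sup>2 * 8 * K + 1"
  have c: "0 < c" unfolding c_def using K0 by (intro add_nonneg_pos mult_nonneg_nonneg) auto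
  have "((\<lambda>x::real. x powr (-\<delta>)) \<longlongrightarrow> 0) at_top"
    using delta by (intro tendsto_neg_powr filterlim_ident) auto
  moreover have "0 < r / (2 * c)" using r c by simp
  ultimately have "eventually (\<lambda>x::real. x powr (-\<delta>) < r / (2 * c)) at_top"
    by (rule order_tendstoD(2))
  then obtain N where N: "\<And>x. N \<le> x \<Longrightarrow> x powr (-\<delta>) < r / (2 * c)"
    unfolding eventually_at_top_linorder by blast
  define R where "R = max N 1"
  have R: "0 < R" "R powr (-\<delta>) < r / (2 * c)" unfolding R_def using N[of "max N 1"] by auto
  have e: "(\<lambda>T. etaT h T) \<longlonglongrightarrow> 0" by (rule etaT_lim)
  have "(\<lambda>T. R * etaT h T + R powr (-\<delta>) * (4 * K) + etaT h T * (1 + K)) \<longlonglongrightarrow> R * 0 + R powr (-\<delta>) * (4 * K) + 0 * (1 + K)"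
    by (intro tendsto_add tendsto_mult_left tendsto_mult_right tendsto_const e)
  then have lim: "(\<lambda>T. Cw\<^sup>2 * (2 * Phi (etaT h T) R)) \<longlonglongrightarrow> Cw\<^sup>2 * (2 * (R powr (-\<delta>) * (4 * K)))"
    by (intro tendsto_mult_left) simp
  have "Cw\<^sup>2 * (2 * (R powr (-\<delta>) * (4 * K))) = (Cw\<^sup>2 * 8 * K) * R powr (-\<delta>)" by (simp only: mult_ac)
  also have "\<dots> \<le> c * R powr (-\<delta>)" unfolding c_def by (intro mult_right_mono) auto
  also have "\<dots> < c * (r / (2 * c))" using R(2) c by (rule mult_strict_left_mono)
  also have "\<dots> < r" using c r by simp
  finally have "Cw\<^sup>2 * (2 * (R powr (-\<delta>) * (4 * K))) < r" .
  from order_tendstoD(2)[OF lim this]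
  show "eventually (\<lambda>T. dist (gg T h - ll T h) 0 < r) sequentially"
  proof (rule eventually_mono)
    fix T assume "Cw\<^sup>2 * (2 * Phi (etaT h T) R) < r"
    then show "dist (gg T h - ll T h) 0 < r" using gg_ll[OF R(1), of T h] by (simp add: dist_real_def)
  qed
qed

end

context main
begin

lemma cov_sum:
  "Cov M (\<lambda>\<omega>. \<Sum>t\<in>{1..int T}. w T t * f s1 (LSX \<mu> At \<epsilon> T t \<omega>))
         (\<lambda>\<omega>. \<Sum>t\<in>{1..int T}. w T t * f s2 (LSX \<mu> At \<epsilon> T t \<omega>))
   = (\<Sum>h\<in>{-int T..int T}. gg T h)"
proof -
  let ?I = "{1..int T}"
  let ?U = "\<lambda>t \<omega>. f s1 (LSX \<mu> At \<epsilon> T t \<omega>)" and ?V = "\<lambda>t \<omega>. f s2 (LSX \<mu> At \<epsilon> T t \<omega>)"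
  let ?F = "\<lambda>t s. w T t * w T s * Cov M (?U t) (?V s)"
  have iU: "integrable M (?U t)" if "t \<in> ?I" for t
    using that by (intro mom_facts(3)[OF _ mom_X[OF s1] K0 delta(1)] YZ_facts(1)[OF s1]) auto
  have iV: "integrable M (?V t)" if "t \<in> ?I" for t
    using that by (intro mom_facts(3)[OF _ mom_X[OF s2] K0 delta(1)] YZ_facts(1)[OF s2]) auto
  have iUV: "integrable M (\<lambda>\<omega>. ?U i \<omega> * ?V j \<omega>)" if "i \<in> ?I" "j \<in> ?I" for i j
    using that by (intro mom_prod_int[OF YZ_facts(1)[OF s1] mom_X[OF s1] YZ_facts(1)[OF s2] mom_X[OF s2] K0 delta(1)]) auto
  have "Cov M (\<lambda>\<omega>. \<Sum>t\<in>?I. w T t * ?U t \<omega>) (\<lambda>\<omega>. \<Sum>t\<in>?I. w T t * ?V t \<omega>) = (\<Sum>t\<in>?I. \<Sum>s\<in>?I. ?F t s)"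
    by (rule Cov_sum[OF _ iU iV iUV]) auto
  also have "\<dots> = (\<Sum>t\<in>?I. \<Sum>h\<in>{-int T..int T}. ?F t (t + h))"
  proof (rule sum.cong[OF refl])
    fix t assume t: "t \<in> ?I"
    have "(\<Sum>h\<in>{-int T..int T}. ?F t (t + h)) = (\<Sum>s\<in>(\<lambda>h. t + h) ` {-int T..int T}. ?F t s)"
      by (subst sum.reindex) (auto simp: inj_on_def)
    also have "(\<lambda>h. t + h) ` {-int T..int T} = {t - int T..t + int T}"
    proof -
      have "(\<lambda>h. t + h) ` {-int T..int T} \<supseteq> {t - int T..t + int T}"
      proof
        fix s assume "s \<in> {t - int T..t + int T}"
        then show "s \<in> (\<lambda>h. t + h) ` {-int T..int T}" by (intro image_eqI[of _ _ "s - t"]) auto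
      qed
      then show ?thesis by auto
    qed
    also have "(\<Sum>s\<in>{t - int T..t + int T}. ?F t s) = (\<Sum>s\<in>?I. ?F t s)"
    proof -
      have "(\<Sum>s\<in>?I. ?F t s) = (\<Sum>s\<in>{t - int T..t + int T}. ?F t s)"
        by (rule sum.mono_neutral_left) (use t w_support in \<open>auto simp: not_le\<close>)
      then show ?thesis by simp
    qed
    finally show "(\<Sum>s\<in>?I. ?F t s) = (\<Sum>h\<in>{-int T..int T}. ?F t (t + h))" by simp
  qed
  also have "\<dots> = (\<Sum>h\<in>{-int T..int T}. \<Sum>t\<in>?I. ?F t (t + h))" by (rule sum.swap)
  also have "\<dots> = (\<Sum>h\<in>{-int T..int T}. gg T h)" unfolding gg_def ..
  finally show ?thesis .
qed

lemma gg_infsum: "infsum (gg T) UNIV = (\<Sum>h\<in>{-int T..int T}. gg T h)"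
proof -
  have "infsum (gg T) UNIV = infsum (gg T) {-int T..int T}"
  proof (rule infsum_cong_neutral)
    fix h assume "h \<in> UNIV - {-int T..int T}"
    then have h: "\<bar>h\<bar> > int T" by auto
    show "gg T h = 0" unfolding gg_def
    proof (rule sum.neutral, intro ballI)
      fix t assume "t \<in> {1..int T}"
      with h have "t + h < 1 \<or> t + h > int T" by auto
      then show "w T t * w T (t + h) * Cov M (\<lambda>\<omega>. f s1 (LSX \<mu> At \<epsilon> T t \<omega>)) (\<lambda>\<omega>. f s2 (LSX \<mu> At \<epsilon> T (t + h) \<omega>)) = 0"
        using w_support by simp
    qed
  qed auto
  then show ?thesis by simp
qed

lemma main_thm:
  fixes L :: "int \<Rightarrow> real"
  assumes L_lim: "\<And>h. (\<lambda>T. ll T h) \<longlonglongrightarrow> L h"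
  shows "L summable_on UNIV \<and>
    (\<lambda>T. Cov M (\<lambda>\<omega>. \<Sum>t\<in>{1..int T}. w T t * f s1 (LSX \<mu> At \<epsilon> T t \<omega>))
                (\<lambda>\<omega>. \<Sum>t\<in>{1..int T}. w T t * f s2 (LSX \<mu> At \<epsilon> T t \<omega>)))
      \<longlonglongrightarrow> infsum L UNIV"
proof -
  have glim: "(\<lambda>T. gg T h) \<longlonglongrightarrow> L h" for h
    using tendsto_add[OF gg_ll_lim[of h] L_lim[of h]] by simp
  have bs: "(\<lambda>h::int. Cw\<^sup>2 * (Cd * qq ^ nat \<bar>h\<bar>)) summable_on UNIV"
    by (intro summable_on_cmult_right geom_all(1)[OF qq])
  note tn = tannery[OF bs gg_bound glim]
  show ?thesis using tn cov_sum gg_infsum by simp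
qed

end

theorem lemma4:
  fixes M :: "'w measure"
    and \<epsilon> :: "int \<Rightarrow> 'w \<Rightarrow> real^'d"
    and \<mu> :: "real \<Rightarrow> real^'d"
    and At :: "nat \<Rightarrow> int \<Rightarrow> int \<Rightarrow> real^'d^'d"
    and A :: "real \<Rightarrow> int \<Rightarrow> real^'d^'d"
    and \<theta> B :: real
    and w :: "nat \<Rightarrow> int \<Rightarrow> real"
    and dT :: "nat \<Rightarrow> nat"
    and Cw :: real
    and S :: "(ereal^'d) set"
    and \<rho> :: "ereal^'d \<Rightarrow> ereal^'d \<Rightarrow> real"
    and f :: "ereal^'d \<Rightarrow> real^'d \<Rightarrow> real"
    and CLip \<delta> :: real
    and s1 s2 :: "ereal^'d"
    and L :: "int \<Rightarrow> real"
  assumes prob: "prob_space M"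
    \<comment> \<open>(LS): innovations i.i.d., centred, integrable\<close>
    and eps_meas: "\<And>t. \<epsilon> t \<in> borel_measurable M"
    and eps_indep: "prob_space.indep_vars M (\<lambda>_. borel) \<epsilon> UNIV"
    and eps_ident: "\<And>t. distr M borel (\<epsilon> t) = distr M borel (\<epsilon> 0)"
    and eps_int: "integrable M (\<epsilon> 0)"
    and eps_centred: "(\<integral>\<omega>. \<epsilon> 0 \<omega> \<partial>M) = 0"
    and mu_C1: "\<exists>D. C1_on_unit_with \<mu> D"
    and theta: "0 < \<theta>" "\<theta> < 1"
    and At_bound: "\<And>T t j. 1 \<le> t \<Longrightarrow> t \<le> int T \<Longrightarrow> mnorm1 (At T t j) \<le> B * \<theta> ^ nat \<bar>j\<bar>"
    and A_C1: "\<And>j p q. \<exists>D. C1_on_unit_with (\<lambda>u. A u j $ p $ q) D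
                  \<and> (\<forall>u\<in>{0..1}. \<bar>D u\<bar> \<le> B * \<theta> ^ nat \<bar>j\<bar>)"
    and A_bound: "\<And>j p q u. u \<in> {0..1} \<Longrightarrow> \<bar>A u j $ p $ q\<bar> \<le> B * \<theta> ^ nat \<bar>j\<bar>"
    and At_A: "\<And>T t j. 1 \<le> t \<Longrightarrow> t \<le> int T \<Longrightarrow>
                 real T * mnorm1 (At T t j - A (real_of_int t / real T) j) \<le> B * \<theta> ^ nat \<bar>j\<bar>"
    \<comment> \<open>(W): weights\<close>
    and w_nonneg: "\<And>T t. 0 \<le> w T t"
    and w_support: "\<And>T t. t < 1 \<or> t > int T \<Longrightarrow> w T t = 0"
    and dT_def: "\<And>T. dT T = card {t. 0 < w T t}"
    and dT_inf: "filterlim (\<lambda>T. real (dT T)) at_top sequentially"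
    and w_bound: "\<And>T t. w T t \<le> Cw / sqrt (real (dT T))"
    \<comment> \<open>(F1)\<close>
    and S_cpt: "compact_semimetric S \<rho>"
    and s1: "s1 \<in> S" and s2: "s2 \<in> S"
    and f_Lip: "\<And>s x y. s \<in> S \<Longrightarrow> \<bar>f s x - f s y\<bar> \<le> CLip * l1norm (x - y)"
    and delta: "0 < \<delta>" "\<delta> < 1/2"
    and moments: "\<exists>C::real. \<forall>s\<in>S.
         (\<forall>T t. 1 \<le> t \<longrightarrow> t \<le> int T \<longrightarrow>
            (\<integral>\<^sup>+\<omega>. ennreal (\<bar>f s (LSX \<mu> At \<epsilon> T t \<omega>)\<bar> powr (2 + \<delta>)) \<partial>M) \<le> ennreal C
          \<and> (\<forall>m. (\<integral>\<^sup>+\<omega>. ennreal (\<bar>f s (LSX_trunc \<mu> At \<epsilon> m T t \<omega>)\<bar> powr (2 + \<delta>)) \<partial>M) \<le> ennreal C))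
       \<and> (\<forall>u\<in>{0..1}.
            (\<integral>\<^sup>+\<omega>. ennreal (\<bar>f s (SX \<mu> A \<epsilon> u 0 \<omega>)\<bar> powr (2 + \<delta>)) \<partial>M) \<le> ennreal C
          \<and> (\<forall>m. (\<integral>\<^sup>+\<omega>. ennreal (\<bar>f s (SX_trunc \<mu> A \<epsilon> m u 0 \<omega>)\<bar> powr (2 + \<delta>)) \<partial>M) \<le> ennreal C))"
    \<comment> \<open>the limits entering the definition of V(s1,s2)\<close>
    and L_lim: "\<And>h. (\<lambda>T. \<Sum>t=1..int T. w T t * w T (t + h) *
                   Cov M (\<lambda>\<omega>. f s1 (SX \<mu> A \<epsilon> (real_of_int t / real T) 0 \<omega>))
                         (\<lambda>\<omega>. f s2 (SX \<mu> A \<epsilon> (real_of_int t / real T) h \<omega>))) \<longlonglongrightarrow> L h"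
  shows "L summable_on UNIV \<and>
    (\<lambda>T. Cov M (\<lambda>\<omega>. \<Sum>t=1..int T. w T t * f s1 (LSX \<mu> At \<epsilon> T t \<omega>))
                (\<lambda>\<omega>. \<Sum>t=1..int T. w T t * f s2 (LSX \<mu> At \<epsilon> T t \<omega>)))
      \<longlonglongrightarrow> (\<Sum>\<^sub>\<infinity>h\<in>UNIV. L h)"
  proof -
  interpret ps: prob_space M by (rule prob)
  have iidI: "iid M \<epsilon>"
    by (intro iid.intro iid_axioms.intro prob eps_meas eps_indep eps_ident eps_int)
  obtain C :: real where C: "\<forall>s\<in>S.
         (\<forall>T t. 1 \<le> t \<longrightarrow> t \<le> int T \<longrightarrow>
            (\<integral>\<^sup>+\<omega>. ennreal (\<bar>f s (LSX \<mu> At \<epsilon> T t \<omega>)\<bar> powr (2 + \<delta>)) \<partial>M) \<le> ennreal C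
          \<and> (\<forall>m. (\<integral>\<^sup>+\<omega>. ennreal (\<bar>f s (LSX_trunc \<mu> At \<epsilon> m T t \<omega>)\<bar> powr (2 + \<delta>)) \<partial>M) \<le> ennreal C))
       \<and> (\<forall>u\<in>{0..1}.
            (\<integral>\<^sup>+\<omega>. ennreal (\<bar>f s (SX \<mu> A \<epsilon> u 0 \<omega>)\<bar> powr (2 + \<delta>)) \<partial>M) \<le> ennreal C
          \<and> (\<forall>m. (\<integral>\<^sup>+\<omega>. ennreal (\<bar>f s (SX_trunc \<mu> A \<epsilon> m u 0 \<omega>)\<bar> powr (2 + \<delta>)) \<partial>M) \<le> ennreal C))"
    using moments by blast
  define K where "K = max C 0"
  have CK: "ennreal C \<le> ennreal K" unfolding K_def by (intro ennreal_leI) simp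
  have mI: "main M \<epsilon> \<mu> At A \<theta> B w dT Cw S f CLip \<delta> K s1 s2"
  proof (intro main.intro main_axioms.intro iidI)
    show "\<And>s T t. s \<in> S \<Longrightarrow> 1 \<le> t \<Longrightarrow> t \<le> int T \<Longrightarrow> mom M \<delta> (\<lambda>\<omega>. f s (LSX \<mu> At \<epsilon> T t \<omega>)) \<le> ennreal K"
      unfolding mom_def using C CK by (meson order_trans)
    show "\<And>s T t m. s \<in> S \<Longrightarrow> 1 \<le> t \<Longrightarrow> t \<le> int T \<Longrightarrow> mom M \<delta> (\<lambda>\<omega>. f s (LSX_trunc \<mu> At \<epsilon> m T t \<omega>)) \<le> ennreal K"
      unfolding mom_def using C CK by (meson order_trans)
    show "\<And>s u. s \<in> S \<Longrightarrow> u \<in> {0..1} \<Longrightarrow> mom M \<delta> (\<lambda>\<omega>. f s (SX \<mu> A \<epsilon> u 0 \<omega>)) \<le> ennreal K"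
      unfolding mom_def using C CK by (meson order_trans)
    show "0 \<le> K" unfolding K_def by simp
  qed (use mu_C1 theta At_bound A_C1 A_bound At_A w_nonneg w_support dT_def w_bound s1 s2 f_Lip delta in auto)
  interpret mm: main M \<epsilon> \<mu> At A \<theta> B w dT Cw S f CLip \<delta> K s1 s2 by (rule mI)
  show ?thesis by (rule mm.main_thm) (unfold mm.ll_def, rule L_lim)
qed

end
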